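(* (a) Given a valuation measure $\overline{\mathbb{Q}}$ with respect to the basket, there exists a unique numéraire-consistent family of probability measures $(\mathbb{Q}_i)_{i=1}^d$ such that $\sum_i\mathbb{Q}_i\sim\overline{\mathbb{Q}}$ and $$\mathbb{E}^{\overline{\mathbb{Q}}}_r[\overline C]=\sum_{j\in\mathfrak{A}(r)}\overline S_j(r)\,\mathbb{E}^{\mathbb{Q}_j}_r\Big[\frac{C_j}{|\mathfrak{A}(T)|}\Big]\qquad( * )$$ for all $r\in[0,T]$ and all $C\in\mathcal{C}$ with $\overline C\in L^1(\overline{\mathbb{Q}})$. (b) Given a numéraire-consistent family of probability measures $(\mathbb{Q}_i)_{i=1}^d$, there exists a unique valuation measure $\overline{\mathbb{Q}}\sim\sum_i\mathbb{Q}_i$ with respect to the basket that satisfies $( * )$ for all $r\in[0,T]$ and all $C\in\mathcal{C}$ with $C_i\in L^1(\mathbb{Q}_i)$ for all $i$. (c) Let $\overline{\mathbb{Q}}$ be a valuation measure with respect to the basket, let $(\mathbb{Q}_i)_i$ be the family from (a), and fix $r\in[0,T]$. If $C\in\mathcal{C}$ satisfies $\overline C=\overline C\mathbf{1}_{\{i\in\mathfrak{A}(T)\}}$ $\overline{\mathbb{Q}}$-a.s. for some $i$, and $\overline C\in L^1(\overline{\mathbb{Q}})$, then $\mathbb{E}^{\overline{\mathbb{Q}}}_r[\overline C]=\overline S_i(r)\,\mathbb{E}^{\mathbb{Q}_i}_r[C_i]$.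
   Context: Fix $T>0$, $d\in\mathbb N$, and a filtered space $(\Omega,\mathcal{F}(T),(\mathcal{F}(t))_{t\in[0,T]})$ with right-continuous filtration and trivial $\mathcal{F}(0)$. For $x,y\in[0,\infty]$ the product $xy$ is defined except when one is $0$ and the other is $\infty$. An exchange matrix is $s=(s_{i,j})\in[0,\infty]^{d\times d}$ with $s_{i,i}=1$ and $s_{i,j}s_{j,k}=s_{i,k}$ for all $i,j,k$ whenever the product is defined. $S=(S_{i,j})_{i,j=1}^d$ is a right-continuous adapted $[0,\infty]^{d\times d}$-valued process such that $S(t)$ is an exchange matrix for every $t$. Active currencies: $\mathfrak{A}(t)=\{i:\sum_jS_{i,j}(t)<\infty\}$, with $\mathfrak A(0)=\{1,\dots,d\}$. Basket prices: $\overline S_i=1/\sum_jS_{i,j}\in[0,1]$. A value vector for an exchange matrix $s$ is $v\in[0,\infty]^d$ with $s_{i,j}v_j=v_i$ for all $i,j$ whenever the product is defined; $\mathcal{C}$ is the set of $\mathcal{F}(T)$-measurable value vectors for $S(T)$. For $C\in\mathcal{C}$, $\overline C=\frac{1}{|\mathfrak{A}(T)|}\sum_{j\in\mathfrak{A}(T)}\overline S_j(T)C_j$ (its value in units of the basket; it equals $\overline S_i(T)C_i$ for any $i\in\mathfrak A(T)$). A valuation measure with respect to the basket is a probability measure $\overline{\mathbb{Q}}$ on $(\Omega,\mathcal{F}(T))$ under which $\overline S=(\overline S_i)_i$ is a local martingale (equivalently, since bounded, a martingale). A family $(\mathbb{Q}_i)_{i=1}^d$ of probability measures on $(\Omega,\mathcal{F}(T))$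 is numéraire-consistent if $\mathbb{E}^{\mathbb{Q}_i}[S_{i,j}(t)\mathbf{1}_A]=S_{i,j}(0)\,\mathbb{Q}_j(A\cap\{S_{j,i}(t)>0\})$ for all $i,j$, $t\in[0,T]$, $A\in\mathcal{F}(t)$. $\mathbb{E}^{\mathbb Q}_r$ denotes conditional expectation under $\mathbb Q$ given $\mathcal F(r)$. *)

theory Defs
  imports "HOL-Probability.Probability"
begin

text \<open>The filtration is F :: real => 'a measure (only space and sets matter);
  F T is the measurable space (Omega, F(T)).
  S t w i j is the (i,j) entry of the exchange matrix S(t) at w.\<close>

definition prod_defined :: "ennreal \<Rightarrow> ennreal \<Rightarrow> bool" where
  "prod_defined x y \<longleftrightarrow> \<not> ((x = 0 \<and> y = \<infinity>) \<or> (x = \<infinity> \<and> y = 0))"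

definition exchange_matrix :: "nat \<Rightarrow> (nat \<Rightarrow> nat \<Rightarrow> ennreal) \<Rightarrow> bool" where
  "exchange_matrix d s \<longleftrightarrow>
     (\<forall>i\<in>{1..d}. s i i = 1) \<and>
     (\<forall>i\<in>{1..d}. \<forall>j\<in>{1..d}. \<forall>k\<in>{1..d}.
        prod_defined (s i j) (s j k) \<longrightarrow> s i j * s j k = s i k)"

definition value_vector :: "nat \<Rightarrow> (nat \<Rightarrow> nat \<Rightarrow> ennreal) \<Rightarrow> (nat \<Rightarrow> ennreal) \<Rightarrow> bool" where
  "value_vector d s v \<longleftrightarrow>
     (\<forall>i\<in>{1..d}. \<forall>j\<in>{1..d}. prod_defined (s i j) (v j) \<longrightarrow> s i j * v j = v i)"

definition filtration :: "real \<Rightarrow> (real \<Rightarrow> 'a measure) \<Rightarrow> bool" where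
  "filtration T F \<longleftrightarrow> T > 0 \<and>
     (\<forall>t\<in>{0..T}. space (F t) = space (F T)) \<and>
     (\<forall>s t. 0 \<le> s \<and> s \<le> t \<and> t \<le> T \<longrightarrow> sets (F s) \<subseteq> sets (F t)) \<and>
     (\<forall>t\<in>{0..<T}. sets (F t) = (\<Inter>u\<in>{t<..T}. sets (F u))) \<and>
     sets (F 0) = {{}, space (F T)}"

definition exchange_process ::
  "nat \<Rightarrow> real \<Rightarrow> (real \<Rightarrow> 'a measure) \<Rightarrow> (real \<Rightarrow> 'a \<Rightarrow> nat \<Rightarrow> nat \<Rightarrow> ennreal) \<Rightarrow> bool" where
  "exchange_process d T F S \<longleftrightarrow>
     (\<forall>t\<in>{0..T}. \<forall>i\<in>{1..d}. \<forall>j\<in>{1..d}. (\<lambda>w. S t w i j) \<in> borel_measurable (F t)) \<and>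
     (\<forall>t\<in>{0..<T}. \<forall>w\<in>space (F T). \<forall>i\<in>{1..d}. \<forall>j\<in>{1..d}.
        ((\<lambda>u. S u w i j) \<longlongrightarrow> S t w i j) (at_right t)) \<and>
     (\<forall>t\<in>{0..T}. \<forall>w\<in>space (F T). exchange_matrix d (S t w))"

definition active ::
  "nat \<Rightarrow> (real \<Rightarrow> 'a \<Rightarrow> nat \<Rightarrow> nat \<Rightarrow> ennreal) \<Rightarrow> real \<Rightarrow> 'a \<Rightarrow> nat set" where
  "active d S t w = {i\<in>{1..d}. (\<Sum>j\<in>{1..d}. S t w i j) < \<infinity>}"

definition basket ::
  "nat \<Rightarrow> (real \<Rightarrow> 'a \<Rightarrow> nat \<Rightarrow> nat \<Rightarrow> ennreal) \<Rightarrow> nat \<Rightarrow> real \<Rightarrow> 'a \<Rightarrow> real" where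
  "basket d S i t w = enn2real (inverse (\<Sum>j\<in>{1..d}. S t w i j))"

definition claims ::
  "nat \<Rightarrow> real \<Rightarrow> (real \<Rightarrow> 'a measure) \<Rightarrow> (real \<Rightarrow> 'a \<Rightarrow> nat \<Rightarrow> nat \<Rightarrow> ennreal)
     \<Rightarrow> ('a \<Rightarrow> nat \<Rightarrow> ennreal) set" where
  "claims d T F S = {C. (\<forall>j\<in>{1..d}. (\<lambda>w. C w j) \<in> borel_measurable (F T)) \<and>
                        (\<forall>w\<in>space (F T). value_vector d (S T w) (C w))}"

definition claim_bar ::
  "nat \<Rightarrow> real \<Rightarrow> (real \<Rightarrow> 'a \<Rightarrow> nat \<Rightarrow> nat \<Rightarrow> ennreal) \<Rightarrow> ('a \<Rightarrow> nat \<Rightarrow> ennreal) \<Rightarrow> 'a \<Rightarrow> ennreal" where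
  "claim_bar d T S C w =
     (\<Sum>j\<in>active d S T w. ennreal (basket d S j T w) * C w j) / of_nat (card (active d S T w))"

definition prob_on :: "real \<Rightarrow> (real \<Rightarrow> 'a measure) \<Rightarrow> 'a measure \<Rightarrow> bool" where
  "prob_on T F Q \<longleftrightarrow> prob_space Q \<and> space Q = space (F T) \<and> sets Q = sets (F T)"

definition L1_nn :: "'a measure \<Rightarrow> ('a \<Rightarrow> ennreal) \<Rightarrow> bool" where
  "L1_nn Q f \<longleftrightarrow> f \<in> borel_measurable Q \<and> (\<integral>\<^sup>+ w. f w \<partial>Q) < \<infinity>"

text \<open>Valuation measure w.r.t. the basket: Sbar is a (bounded, hence true) martingale.\<close>
definition valuation_measure ::
  "nat \<Rightarrow> real \<Rightarrow> (real \<Rightarrow> 'a measure) \<Rightarrow> (real \<Rightarrow> 'a \<Rightarrow> nat \<Rightarrow> nat \<Rightarrow> ennreal) \<Rightarrow> 'a measure \<Rightarrow> bool" where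
  "valuation_measure d T F S Qb \<longleftrightarrow> prob_on T F Qb \<and>
     (\<forall>i\<in>{1..d}. \<forall>s t. 0 \<le> s \<and> s \<le> t \<and> t \<le> T \<longrightarrow>
        (AE w in Qb. real_cond_exp Qb (F s) (basket d S i t) w = basket d S i s w))"

text \<open>Numeraire-consistent family. S(0) is deterministic (F(0) trivial), so S_ij(0)
  is evaluated at an arbitrary sample point w0.\<close>
definition numeraire_consistent ::
  "nat \<Rightarrow> real \<Rightarrow> (real \<Rightarrow> 'a measure) \<Rightarrow> (real \<Rightarrow> 'a \<Rightarrow> nat \<Rightarrow> nat \<Rightarrow> ennreal) \<Rightarrow> (nat \<Rightarrow> 'a measure) \<Rightarrow> bool" where
  "numeraire_consistent d T F S Q \<longleftrightarrow>
     (\<forall>i\<in>{1..d}. prob_on T F (Q i)) \<and>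
     (\<forall>i\<in>{1..d}. \<forall>j\<in>{1..d}. \<forall>t\<in>{0..T}. \<forall>A\<in>sets (F t). \<forall>w0\<in>space (F T).
        (\<integral>\<^sup>+ w. S t w i j * indicator A w \<partial>(Q i)) =
        S 0 w0 i j * emeasure (Q j) (A \<inter> {w\<in>space (F T). S t w j i > 0}))"

definition equiv_sum :: "nat \<Rightarrow> real \<Rightarrow> (real \<Rightarrow> 'a measure) \<Rightarrow> (nat \<Rightarrow> 'a measure) \<Rightarrow> 'a measure \<Rightarrow> bool" where
  "equiv_sum d T F Q Qb \<longleftrightarrow>
     (\<forall>A\<in>sets (F T). emeasure Qb A = 0 \<longleftrightarrow> (\<forall>i\<in>{1..d}. emeasure (Q i) A = 0))"

definition star_identity ::
  "nat \<Rightarrow> real \<Rightarrow> (real \<Rightarrow> 'a measure) \<Rightarrow> (real \<Rightarrow> 'a \<Rightarrow> nat \<Rightarrow> nat \<Rightarrow> ennreal)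
     \<Rightarrow> (nat \<Rightarrow> 'a measure) \<Rightarrow> 'a measure \<Rightarrow> real \<Rightarrow> ('a \<Rightarrow> nat \<Rightarrow> ennreal) \<Rightarrow> bool" where
  "star_identity d T F S Q Qb r C \<longleftrightarrow>
     (AE w in Qb. nn_cond_exp Qb (F r) (claim_bar d T S C) w =
        (\<Sum>j\<in>active d S r w. ennreal (basket d S j r w) *
           nn_cond_exp (Q j) (F r) (\<lambda>x. C x j / of_nat (card (active d S T x))) w))"

end

theory Submission
  imports Defs "HOL-Probability.Probability"
begin

definition rs :: "nat \<Rightarrow> (nat \<Rightarrow> nat \<Rightarrow> ennreal) \<Rightarrow> nat \<Rightarrow> ennreal" where
  "rs d s i = (\<Sum>j\<in>{1..d}. s i j)"
definition actm :: "nat \<Rightarrow> (nat \<Rightarrow> nat \<Rightarrow> ennreal) \<Rightarrow> nat set" where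
  "actm d s = {i\<in>{1..d}. rs d s i < \<top>}"

locale xm =
  fixes d :: nat and s :: "nat \<Rightarrow> nat \<Rightarrow> ennreal"
  assumes em: "exchange_matrix d s"
begin

lemma diag: "i \<in> {1..d} \<Longrightarrow> s i i = 1"
  using em unfolding exchange_matrix_def by auto

lemma mul: "i \<in> {1..d} \<Longrightarrow> j \<in> {1..d} \<Longrightarrow> k \<in> {1..d} \<Longrightarrow> prod_defined (s i j) (s j k)
  \<Longrightarrow> s i j * s j k = s i k"
  using em unfolding exchange_matrix_def by auto

lemma top_zero: assumes "i \<in> {1..d}" "j \<in> {1..d}" "s i j = \<top>" shows "s j i = 0"
proof (rule ccontr)
  assume "s j i \<noteq> 0"
  then have "prod_defined (s i j) (s j i)" using assms unfolding prod_defined_def by auto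
  then have "s i j * s j i = 1" using mul[OF assms(1,2,1)] diag[OF assms(1)] by simp
  with assms \<open>s j i \<noteq> 0\<close> show False by (simp add: ennreal_top_mult)
qed

lemma rs_ge1: "i \<in> {1..d} \<Longrightarrow> 1 \<le> rs d s i"
  unfolding rs_def using member_le_sum[of i "{1..d}" "s i"] diag by auto

lemma act_iff: "i \<in> actm d s \<longleftrightarrow> i \<in> {1..d} \<and> (\<forall>j\<in>{1..d}. s i j < \<top>)"
  unfolding actm_def rs_def by (auto simp: ennreal_sum_less_top)

lemma act_sub: "actm d s \<subseteq> {1..d}" unfolding actm_def by auto

lemma act_ne: assumes "d \<ge> 1" shows "actm d s \<noteq> {}"
proof -
  define N where "N i = card {k\<in>{1..d}. s i k = \<top>}" for i
  have ne: "N ` {1..d} \<noteq> {}" using assms by auto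
  have "Min (N ` {1..d}) \<in> N ` {1..d}" using ne by (intro Min_in) auto
  then obtain i where i: "i \<in> {1..d}" "N i = Min (N ` {1..d})" by auto
  have mn: "N i \<le> N j" if "j \<in> {1..d}" for j using i that by auto
  have "i \<in> actm d s"
  proof (rule ccontr)
    assume "i \<notin> actm d s"
    then obtain j where j: "j \<in> {1..d}" "s i j = \<top>" using i act_iff by (auto simp: less_top[symmetric])
    have "{k\<in>{1..d}. s j k = \<top>} \<subset> {k\<in>{1..d}. s i k = \<top>}"
    proof
      show "{k\<in>{1..d}. s j k = \<top>} \<subseteq> {k\<in>{1..d}. s i k = \<top>}"
      proof safe
        fix k assume k: "k \<in> {1..d}" "s j k = \<top>"
        have "prod_defined (s i j) (s j k)" using j k unfolding prod_defined_def by auto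
        then have "s i j * s j k = s i k" using mul[OF i(1) j(1) k(1)] by simp
        with j k show "s i k = \<top>" by simp
      qed
      show "{k\<in>{1..d}. s j k = \<top>} \<noteq> {k\<in>{1..d}. s i k = \<top>}"
      proof
        assume eq: "{k\<in>{1..d}. s j k = \<top>} = {k\<in>{1..d}. s i k = \<top>}"
        have "j \<in> {k\<in>{1..d}. s i k = \<top>}" using j by auto
        then have "s j j = \<top>" using eq by blast
        with diag[OF j(1)] show False by simp
      qed
    qed
    then have "N j < N i" unfolding N_def by (intro psubset_card_mono) auto
    with mn[OF j(1)] show False by simp
  qed
  then show ?thesis by auto
qed

lemma act_nz: assumes "i \<in> actm d s" "j \<in> actm d s" shows "s i j \<noteq> 0" "s i j < \<top>"
proof -
  show "s i j < \<top>" using assms act_iff by auto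
  show "s i j \<noteq> 0"
  proof
    assume z: "s i j = 0"
    have "s j i < \<top>" using assms act_iff by auto
    then have "prod_defined (s i j) (s j i)" using z unfolding prod_defined_def by auto
    then have "s i j * s j i = 1" using mul diag assms act_iff by auto
    with z show False by simp
  qed
qed

lemma act_inact: assumes "i \<in> actm d s" "j \<in> {1..d}" "j \<notin> actm d s" shows "s i j = 0"
proof (rule ccontr)
  assume nz: "s i j \<noteq> 0"
  obtain k where k: "k \<in> {1..d}" "s j k = \<top>" using assms act_iff by (auto simp: less_top[symmetric])
  have "prod_defined (s i j) (s j k)" using nz k unfolding prod_defined_def by auto
  moreover have "i \<in> {1..d}" using assms act_sub by auto
  ultimately have "s i j * s j k = s i k" using mul[of i j k] assms k by simp
  then have "s i k = \<top>" using nz k by (simp add: ennreal_mult_top)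
  moreover have "s i k < \<top>" using assms(1) k(1) act_iff by blast
  ultimately show False by simp
qed

lemma act_col: assumes "i \<in> actm d s" "j \<in> {1..d}" shows "s j i \<noteq> 0"
proof
  assume z: "s j i = 0"
  have "s i j < \<top>" using assms act_iff by auto
  then have "prod_defined (s i j) (s j i)" using z unfolding prod_defined_def by auto
  then have "s i j * s j i = 1" using mul diag assms act_iff by auto
  with z show False by simp
qed

definition ib where "ib i = inverse (rs d s i)"

lemma ib_inact: "i \<notin> actm d s \<Longrightarrow> i \<in> {1..d} \<Longrightarrow> ib i = 0"
  unfolding ib_def actm_def by (auto simp: less_top[symmetric])

lemma ib_act: "i \<in> actm d s \<Longrightarrow> ib i \<noteq> 0 \<and> ib i < \<top>"
  unfolding ib_def using rs_ge1[of i] act_sub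
  by (auto simp: actm_def less_top[symmetric])

lemma rs_mult: assumes "i \<in> actm d s" "j \<in> actm d s" shows "rs d s i = s i j * rs d s j"
proof -
  have "rs d s i = (\<Sum>k\<in>{1..d}. s i j * s j k)"
    unfolding rs_def
  proof (rule sum.cong)
    fix k assume k: "k \<in> {1..d}"
    have "prod_defined (s i j) (s j k)" using act_nz[OF assms] unfolding prod_defined_def by auto
    moreover have "i \<in> {1..d}" "j \<in> {1..d}" using assms act_sub by auto
    ultimately show "s i k = s i j * s j k" using mul k by metis
  qed simp
  then show ?thesis unfolding rs_def by (simp add: sum_distrib_left)
qed

lemma key: assumes "i \<in> {1..d}" "j \<in> {1..d}"
  shows "s i j * ib i = ib j * (if s j i \<noteq> 0 then 1 else 0)"
proof (cases "i \<in> actm d s")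
  case True
  show ?thesis
  proof (cases "j \<in> actm d s")
    case True2: True
    have nz: "s i j \<noteq> 0" "s i j < \<top>" using act_nz[OF True True2] by auto
    have rj: "rs d s j < \<top>" using True2 unfolding actm_def by auto
    have "s i j * ib i = s i j * (inverse (s i j) * ib j)"
      unfolding ib_def rs_mult[OF True True2] using nz rj by (simp add: ennreal_inverse_mult)
    also have "\<dots> = ib j" using nz by (simp add: mult.assoc[symmetric] ennreal_divide_self[unfolded divide_ennreal_def])
    finally show ?thesis using act_col[OF True assms(2)] by simp
  next
    case False
    then show ?thesis using act_inact[OF True assms(2) False] ib_inact[OF False assms(2)] by simp
  qed
next
  case False
  have "ib j * (if s j i \<noteq> 0 then 1 else 0) = 0"
  proof (cases "j \<in> actm d s \<and> s j i \<noteq> 0")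
    case True
    then have "s j i = 0" using act_inact[of j i] False assms by auto
    with True show ?thesis by simp
  next
    case False2: False
    then show ?thesis using ib_inact[OF _ assms(2)] by auto
  qed
  then show ?thesis using ib_inact[OF False assms(1)] by simp
qed

lemma sum_ib: assumes "d \<ge> 1" shows "(\<Sum>j\<in>{1..d}. ib j) = 1"
proof -
  obtain i where i: "i \<in> actm d s" using act_ne[OF assms] by auto
  have ii: "i \<in> {1..d}" using i act_sub by auto
  have "(\<Sum>j\<in>{1..d}. ib j) = (\<Sum>j\<in>{1..d}. s i j * ib i)"
  proof (rule sum.cong)
    fix j assume j: "j \<in> {1..d}"
    show "ib j = s i j * ib i"
    proof (cases "j \<in> actm d s")
      case True then show ?thesis using key[OF ii j] act_col[OF i j] by simp
    next
      case False then show ?thesis using act_inact[OF i j False] ib_inact[OF False j] by simp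
    qed
  qed simp
  also have "\<dots> = rs d s i * ib i" unfolding rs_def by (simp add: sum_distrib_right)
  also have "\<dots> = 1" unfolding ib_def using rs_ge1[OF ii] i unfolding actm_def
    by (auto intro!: ennreal_divide_self[unfolded divide_ennreal_def])
  finally show ?thesis .
qed

lemma vv: assumes "value_vector d s v" "i \<in> actm d s" "j \<in> actm d s"
  shows "ib i * v i = ib j * v j"
proof -
  have "prod_defined (s i j) (v j)" using act_nz[OF assms(2,3)] unfolding prod_defined_def by auto
  then have "s i j * v j = v i" using assms act_sub unfolding value_vector_def by auto
  then have "ib i * v i = ib i * (s i j * v j)" by simp
  then have "ib i * v i = (s i j * ib i) * v j" by (simp add: mult_ac)
  also have "\<dots> = ib j * v j"
  proof -
    have ij: "i \<in> {1..d}" "j \<in> {1..d}" using assms act_sub by auto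
    show ?thesis using key[OF ij] act_col[OF assms(2) ij(2)] by simp
  qed
  finally show ?thesis .
qed

lemma pos_set: assumes "i \<in> actm d s" shows "{j\<in>{1..d}. s i j \<noteq> 0} = actm d s"
  using act_nz[OF assms] act_inact[OF assms] act_sub by blast

end

context sigma_finite_subalgebra
begin

lemma nc_sum_fin:
  assumes "finite J" "\<And>j. j \<in> J \<Longrightarrow> f j \<in> borel_measurable M"
  shows "AE x in M. nn_cond_exp M F (\<lambda>x. \<Sum>j\<in>J. f j x) x = (\<Sum>j\<in>J. nn_cond_exp M F (f j) x)"
  using assms
proof (induction J rule: finite_induct)
  case empty
  have "AE x in M. (\<lambda>x. 0::ennreal) x = nn_cond_exp M F (\<lambda>x. 0) x"
    by (rule nn_cond_exp_F_meas) simp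
  then show ?case by auto
next
  case (insert a J)
  have m: "(\<lambda>x. \<Sum>j\<in>J. f j x) \<in> borel_measurable M" using insert by auto
  have "AE x in M. nn_cond_exp M F (f a) x + nn_cond_exp M F (\<lambda>x. \<Sum>j\<in>J. f j x) x
      = nn_cond_exp M F (\<lambda>x. f a x + (\<Sum>j\<in>J. f j x)) x"
    by (rule nn_cond_exp_sum) (use insert m in auto)
  moreover have "AE x in M. nn_cond_exp M F (\<lambda>x. \<Sum>j\<in>J. f j x) x = (\<Sum>j\<in>J. nn_cond_exp M F (f j) x)"
    using insert by auto
  ultimately show ?case using insert by (auto elim!: eventually_elim2)
qed

lemma nc_cmult:
  assumes "f \<in> borel_measurable M"
  shows "AE x in M. nn_cond_exp M F (\<lambda>x. c * f x) x = c * nn_cond_exp M F f x"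
  using nn_cond_exp_prod[of "\<lambda>_. c" f] assms by auto

lemma rce_nn:
  assumes "f \<in> borel_measurable M" "\<And>x. f x \<ge> 0"
  shows "AE x in M. real_cond_exp M F f x = enn2real (nn_cond_exp M F (\<lambda>x. ennreal (f x)) x)"
proof -
  have e: "(\<lambda>x. ennreal (- f x)) = (\<lambda>x. 0)" using assms(2) by (auto simp: ennreal_neg)
  have "AE x in M. (\<lambda>x. 0::ennreal) x = nn_cond_exp M F (\<lambda>x. 0) x"
    by (rule nn_cond_exp_F_meas) simp
  then show ?thesis unfolding real_cond_exp_def e by auto
qed

end

lemma bayes:
  assumes sM: "sigma_finite_subalgebra M G" and sQ: "sigma_finite_subalgebra (density M Z) G"
    and [measurable]: "Z \<in> borel_measurable M" "X \<in> borel_measurable M"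
  shows "AE x in M. nn_cond_exp M G (\<lambda>x. Z x * X x) x
     = nn_cond_exp M G Z x * nn_cond_exp (density M Z) G X x"
proof -
  interpret sM: sigma_finite_subalgebra M G by (rule sM)
  interpret sQ: sigma_finite_subalgebra "density M Z" G by (rule sQ)
  have XQ: "X \<in> borel_measurable (density M Z)" by simp
  have "AE x in M. nn_cond_exp M G Z x * nn_cond_exp (density M Z) G X x = nn_cond_exp M G (\<lambda>x. Z x * X x) x"
  proof (rule sM.nn_cond_exp_charact)
    fix A assume A: "A \<in> sets G"
    have AM: "A \<in> sets M" using A sM.subalg unfolding subalgebra_def by auto
    have m1: "(\<lambda>x. indicator A x * nn_cond_exp (density M Z) G X x) \<in> borel_measurable G"
      using A by measurable
    then have m1M: "(\<lambda>x. indicator A x * nn_cond_exp (density M Z) G X x) \<in> borel_measurable M"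
      by (rule measurable_from_subalg[OF sM.subalg])
    have "(\<integral>\<^sup>+ x\<in>A. nn_cond_exp M G Z x * nn_cond_exp (density M Z) G X x \<partial>M)
        = (\<integral>\<^sup>+ x. (indicator A x * nn_cond_exp (density M Z) G X x) * nn_cond_exp M G Z x \<partial>M)"
      by (rule nn_integral_cong) (simp add: mult_ac)
    also have "\<dots> = (\<integral>\<^sup>+ x. (indicator A x * nn_cond_exp (density M Z) G X x) * Z x \<partial>M)"
      by (rule sM.nn_cond_exp_intg[OF m1]) simp
    also have "\<dots> = (\<integral>\<^sup>+ x. indicator A x * nn_cond_exp (density M Z) G X x \<partial>density M Z)"
      using m1M by (subst nn_integral_density) (auto simp: mult_ac)
    also have "\<dots> = (\<integral>\<^sup>+ x. indicator A x * X x \<partial>density M Z)"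
      using A by (intro sQ.nn_cond_exp_intg) auto
    also have "\<dots> = (\<integral>\<^sup>+ x. Z x * (indicator A x * X x) \<partial>M)"
      using AM by (subst nn_integral_density) auto
    also have "\<dots> = (\<integral>\<^sup>+ x\<in>A. Z x * X x \<partial>M)"
      by (rule nn_integral_cong) (simp add: mult_ac)
    finally show "(\<integral>\<^sup>+ x\<in>A. Z x * X x \<partial>M) = (\<integral>\<^sup>+ x\<in>A. nn_cond_exp M G Z x * nn_cond_exp (density M Z) G X x \<partial>M)"
      by simp
  qed auto
  then show ?thesis by auto
qed

lemma meas_tr: "sets A = sets B \<Longrightarrow> f \<in> borel_measurable B \<Longrightarrow> f \<in> borel_measurable A"
  using measurable_cong_sets[of A B borel borel] by simp

lemma nn_integral_summeas:
  assumes sN: "sets N = sets M0" and spN: "space N = space M0"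
    and sQ: "\<And>k. k \<in> K \<Longrightarrow> sets (Q k) = sets M0 \<and> space (Q k) = space M0"
    and em: "\<And>A. A \<in> sets M0 \<Longrightarrow> emeasure N A = (\<Sum>k\<in>K. a k * emeasure (Q k) A)"
    and f: "f \<in> borel_measurable N"
  shows "(\<integral>\<^sup>+ x. f x \<partial>N) = (\<Sum>k\<in>K. a k * (\<integral>\<^sup>+ x. f x \<partial>Q k))"
proof (induction rule: borel_measurable_induct[OF f, case_names cong set mult add sup])
  case (cong f g)
  have eq: "\<And>x. x \<in> space N \<Longrightarrow> f x = g x" by fact
  have "(\<integral>\<^sup>+ x. f x \<partial>N) = (\<integral>\<^sup>+ x. g x \<partial>N)" using eq by (intro nn_integral_cong) blast
  moreover have "(\<integral>\<^sup>+ x. f x \<partial>Q k) = (\<integral>\<^sup>+ x. g x \<partial>Q k)" if "k \<in> K" for k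
  proof (rule nn_integral_cong)
    fix x assume "x \<in> space (Q k)"
    then show "f x = g x" using eq sQ[OF that] spN by simp
  qed
  ultimately show ?case using cong(4) by simp
next
  case (set A)
  then have "A \<in> sets (Q k)" if "k \<in> K" for k using sQ[OF that] sN by auto
  then show ?case using set em sN by simp
next
  case (mult u c)
  have mN: "u \<in> borel_measurable N" by fact
  have IH: "(\<integral>\<^sup>+ x. u x \<partial>N) = (\<Sum>k\<in>K. a k * (\<integral>\<^sup>+ x. u x \<partial>Q k))" by fact
  have mQ: "u \<in> borel_measurable (Q k)" if "k \<in> K" for k
    using mN sQ[OF that] sN by (auto intro: meas_tr)
  have "(\<integral>\<^sup>+ x. c * u x \<partial>N) = c * (\<integral>\<^sup>+ x. u x \<partial>N)" using mN by (rule nn_integral_cmult)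
  also have "\<dots> = (\<Sum>k\<in>K. c * (a k * (\<integral>\<^sup>+ x. u x \<partial>Q k)))"
    unfolding IH by (rule sum_distrib_left)
  also have "\<dots> = (\<Sum>k\<in>K. a k * (\<integral>\<^sup>+ x. c * u x \<partial>Q k))"
  proof (rule sum.cong)
    fix k assume "k \<in> K"
    then show "c * (a k * (\<integral>\<^sup>+ x. u x \<partial>Q k)) = a k * (\<integral>\<^sup>+ x. c * u x \<partial>Q k)"
      using nn_integral_cmult[OF mQ[OF \<open>k \<in> K\<close>], of c] by (simp add: mult.left_commute)
  qed simp
  finally show ?case .
next
  case (add u v)
  have mN: "u \<in> borel_measurable N" "v \<in> borel_measurable N" by fact+
  have IH: "(\<integral>\<^sup>+ x. u x \<partial>N) = (\<Sum>k\<in>K. a k * (\<integral>\<^sup>+ x. u x \<partial>Q k))"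
    "(\<integral>\<^sup>+ x. v x \<partial>N) = (\<Sum>k\<in>K. a k * (\<integral>\<^sup>+ x. v x \<partial>Q k))" by fact+
  have mQ: "u \<in> borel_measurable (Q k)" "v \<in> borel_measurable (Q k)" if "k \<in> K" for k
    using mN sQ[OF that] sN by (auto intro: meas_tr)
  have "(\<integral>\<^sup>+ x. v x + u x \<partial>N) = (\<integral>\<^sup>+ x. v x \<partial>N) + (\<integral>\<^sup>+ x. u x \<partial>N)"
    using mN by (intro nn_integral_add) auto
  also have "\<dots> = (\<Sum>k\<in>K. a k * (\<integral>\<^sup>+ x. v x \<partial>Q k) + a k * (\<integral>\<^sup>+ x. u x \<partial>Q k))"
    unfolding IH by (rule sum.distrib[symmetric])
  also have "\<dots> = (\<Sum>k\<in>K. a k * (\<integral>\<^sup>+ x. v x + u x \<partial>Q k))"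
  proof (rule sum.cong)
    fix k assume "k \<in> K"
    then show "a k * (\<integral>\<^sup>+ x. v x \<partial>Q k) + a k * (\<integral>\<^sup>+ x. u x \<partial>Q k) = a k * (\<integral>\<^sup>+ x. v x + u x \<partial>Q k)"
      using nn_integral_add[OF mQ(2)[OF \<open>k \<in> K\<close>] mQ(1)[OF \<open>k \<in> K\<close>]] by (simp add: distrib_left)
  qed simp
  finally show ?case .
next
  case (sup U)
  have mQ: "U i \<in> borel_measurable (Q k)" if "k \<in> K" for k i
    using sup(1)[of i] sQ[OF that] sN by (auto intro: meas_tr)
  have "(\<integral>\<^sup>+ x. (\<Squnion> range U) x \<partial>N) = (\<integral>\<^sup>+ x. (\<Squnion>i. U i x) \<partial>N)" unfolding SUP_apply ..
  also have "\<dots> = (\<Squnion>i. (\<integral>\<^sup>+ x. U i x \<partial>N))"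
    using sup by (intro nn_integral_monotone_convergence_SUP) auto
  also have "\<dots> = (\<Squnion>i. \<Sum>k\<in>K. a k * (\<integral>\<^sup>+ x. U i x \<partial>Q k))" using sup by simp
  also have "\<dots> = (\<Sum>k\<in>K. \<Squnion>i. a k * (\<integral>\<^sup>+ x. U i x \<partial>Q k))"
  proof (rule ennreal_SUP_sum)
    fix k assume "k \<in> K"
    show "incseq (\<lambda>i. a k * (\<integral>\<^sup>+ x. U i x \<partial>Q k))"
      using \<open>incseq U\<close> unfolding incseq_def le_fun_def
      by (auto intro!: mult_left_mono nn_integral_mono)
  qed
  also have "\<dots> = (\<Sum>k\<in>K. a k * (\<integral>\<^sup>+ x. (\<Squnion>i. U i x) \<partial>Q k))"
  proof (rule sum.cong)
    fix k assume k: "k \<in> K"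
    have "(\<integral>\<^sup>+ x. (\<Squnion>i. U i x) \<partial>Q k) = (\<Squnion>i. (\<integral>\<^sup>+ x. U i x \<partial>Q k))"
      using sup mQ[OF k] by (intro nn_integral_monotone_convergence_SUP) auto
    then show "(\<Squnion>i. a k * (\<integral>\<^sup>+ x. U i x \<partial>Q k)) = a k * (\<integral>\<^sup>+ x. (\<Squnion>i. U i x) \<partial>Q k)"
      by (simp add: SUP_mult_left_ennreal)
  qed simp
  also have "\<dots> = (\<Sum>k\<in>K. a k * (\<integral>\<^sup>+ x. (\<Squnion> range U) x \<partial>Q k))" unfolding SUP_apply ..
  finally show ?case .
qed

locale mk =
  fixes d :: nat and T :: real and F :: "real \<Rightarrow> 'a measure"
    and S :: "real \<Rightarrow> 'a \<Rightarrow> nat \<Rightarrow> nat \<Rightarrow> ennreal"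
  assumes d: "d \<ge> 1"
    and filt: "filtration T F"
    and proc: "exchange_process d T F S"
    and act0: "\<forall>w\<in>space (F T). active d S 0 w = {1..d}"
begin

abbreviation "\<Omega> \<equiv> space (F T)"

lemmas filt_parts = filt[unfolded filtration_def, THEN conjunct1]
    filt[unfolded filtration_def, THEN conjunct2, THEN conjunct1]
    filt[unfolded filtration_def, THEN conjunct2, THEN conjunct2, THEN conjunct1]
    filt[unfolded filtration_def, THEN conjunct2, THEN conjunct2, THEN conjunct2, THEN conjunct2]
lemma Tpos: "T > 0" by (rule filt_parts(1))
lemma spF: "t \<in> {0..T} \<Longrightarrow> space (F t) = \<Omega>" using filt_parts(2) by blast
lemma setsF: "0 \<le> s \<Longrightarrow> s \<le> t \<Longrightarrow> t \<le> T \<Longrightarrow> sets (F s) \<subseteq> sets (F t)"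
  using filt_parts(3) by blast
lemma setsFT: "t \<in> {0..T} \<Longrightarrow> sets (F t) \<subseteq> sets (F T)" using setsF by auto
lemma F0: "sets (F 0) = {{}, \<Omega>}" by (rule filt_parts(4))
lemma Smeas: "t \<in> {0..T} \<Longrightarrow> i \<in> {1..d} \<Longrightarrow> j \<in> {1..d} \<Longrightarrow> (\<lambda>w. S t w i j) \<in> borel_measurable (F t)"
  using proc unfolding exchange_process_def by blast
lemma Sem: "t \<in> {0..T} \<Longrightarrow> w \<in> \<Omega> \<Longrightarrow> xm d (S t w)"
  using proc unfolding exchange_process_def xm_def by blast
lemma active_eq: "active d S t w = actm d (S t w)"
  unfolding active_def actm_def rs_def by simp

lemma sb_eq: assumes "t \<in> {0..T}" "w \<in> \<Omega>" "i \<in> {1..d}"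
  shows "ennreal (basket d S i t w) = xm.ib d (S t w) i"
proof -
  interpret xm d "S t w" using Sem assms by auto
  have "rs d (S t w) i \<noteq> 0" using rs_ge1[OF assms(3)] by auto
  then have "inverse (rs d (S t w) i) < \<top>" by (simp add: less_top[symmetric])
  then show ?thesis unfolding basket_def ib_def rs_def by (simp add: ennreal_enn2real)
qed

lemma basket_meas: "t \<in> {0..T} \<Longrightarrow> i \<in> {1..d} \<Longrightarrow> (\<lambda>w. basket d S i t w) \<in> borel_measurable (F t)"
proof -
  assume t: "t \<in> {0..T}" and i: "i \<in> {1..d}"
  have "(\<lambda>w. \<Sum>j\<in>{1..d}. S t w i j) \<in> borel_measurable (F t)"
    by (rule borel_measurable_sum) (use Smeas t i in auto)
  then show ?thesis unfolding basket_def by (intro borel_measurable_enn2real borel_measurable_inverse_ennreal)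
qed

lemma act_meas: "t \<in> {0..T} \<Longrightarrow> i \<in> {1..d} \<Longrightarrow> {w\<in>\<Omega>. i \<in> active d S t w} \<in> sets (F t)"
proof -
  assume t: "t \<in> {0..T}" and i: "i \<in> {1..d}"
  have "(\<lambda>w. \<Sum>j\<in>{1..d}. S t w i j) \<in> borel_measurable (F t)"
    by (rule borel_measurable_sum) (use Smeas t i in auto)
  then have "{w\<in>space (F t). (\<Sum>j\<in>{1..d}. S t w i j) < \<top>} \<in> sets (F t)" by measurable
  moreover have "{w\<in>\<Omega>. i \<in> active d S t w} = {w\<in>space (F t). (\<Sum>j\<in>{1..d}. S t w i j) < \<top>}"
    using spF[OF t] i unfolding active_def by auto
  ultimately show ?thesis by simp
qed

lemma zeroT: "(0::real) \<in> {0..T}" "T \<in> {0..T}" using Tpos by auto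

lemma const0: fixes f :: "'a \<Rightarrow> 'b::t1_space"
  assumes f: "f \<in> borel_measurable (F 0)" and w: "w \<in> \<Omega>" "w' \<in> \<Omega>"
  shows "f w = f w'"
proof -
  have sp: "space (F 0) = \<Omega>" using spF zeroT by blast
  have "f -` {f w} \<inter> space (F 0) \<in> sets (F 0)"
    using f by (intro measurable_sets[OF f]) (auto intro: borel_closed)
  then have "f -` {f w} \<inter> \<Omega> \<in> {{}, \<Omega>}" using F0 sp by simp
  moreover have "w \<in> f -` {f w} \<inter> \<Omega>" using w by auto
  ultimately have eq: "f -` {f w} \<inter> \<Omega> = \<Omega>" by auto
  have "w' \<in> f -` {f w} \<inter> \<Omega>" using w(2) by (subst eq)
  then show ?thesis by simp
qed

definition c :: "nat \<Rightarrow> real" where "c i = basket d S i 0 (SOME w. w \<in> \<Omega>)"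

lemma c_eq: assumes w: "w \<in> \<Omega>" and i: "i \<in> {1..d}" shows "basket d S i 0 w = c i"
proof -
  have s: "(SOME w. w \<in> \<Omega>) \<in> \<Omega>" using w by (rule someI)
  show ?thesis unfolding c_def
    by (rule const0[OF basket_meas[OF zeroT(1) i] w s])
qed

lemma sb0: "w \<in> \<Omega> \<Longrightarrow> i \<in> {1..d} \<Longrightarrow> xm.ib d (S 0 w) i = ennreal (c i)"
  using sb_eq[OF zeroT(1)] c_eq by metis

lemma c_pos: assumes w: "w \<in> \<Omega>" and i: "i \<in> {1..d}" shows "c i > 0"
proof -
  interpret xm d "S 0 w" using Sem zeroT w by auto
  have "i \<in> actm d (S 0 w)" using act0 w i active_eq by auto
  then have "ib i \<noteq> 0" using ib_act by auto
  then have "ennreal (c i) \<noteq> 0" using sb0[OF w i] by simp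
  moreover have "c i \<ge> 0" using c_eq[OF w i] enn2real_nonneg unfolding basket_def by metis
  ultimately show ?thesis by (simp add: order_less_le)
qed

lemma key0: assumes w: "w \<in> \<Omega>" and i: "i \<in> {1..d}" and j: "j \<in> {1..d}"
  shows "S 0 w i j * ennreal (c i) = ennreal (c j)"
proof -
  interpret xm d "S 0 w" using Sem zeroT w by auto
  have "i \<in> actm d (S 0 w)" using act0 w i active_eq by auto
  then have "S 0 w j i \<noteq> 0" using act_col j by auto
  then show ?thesis using key[OF i j] sb0[OF w i] sb0[OF w j] by simp
qed

lemma S0_fin: "w \<in> \<Omega> \<Longrightarrow> i \<in> {1..d} \<Longrightarrow> j \<in> {1..d} \<Longrightarrow> S 0 w i j < \<top>"
  using act0 active_eq xm.act_iff Sem zeroT by blast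

lemma sfs: assumes "prob_on T F M" "t \<in> {0..T}" shows "sigma_finite_subalgebra M (F t)"
proof -
  interpret prob_space M using assms unfolding prob_on_def by auto
  have sp: "space (F t) = \<Omega>" using spF assms(2) by blast
  have "subalgebra M (F t)" unfolding subalgebra_def
    using assms(1) sp setsFT[OF assms(2)] unfolding prob_on_def by auto
  then have "finite_measure_subalgebra M (F t)"
    unfolding finite_measure_subalgebra_def finite_measure_subalgebra_axioms_def
    using finite_measure_axioms by auto
  then show ?thesis using finite_measure_subalgebra_is_sigma_finite by auto
qed

lemma mFt: assumes "prob_on T F M" "t \<in> {0..T}" "f \<in> borel_measurable (F t)"
  shows "f \<in> borel_measurable M"
proof -
  interpret sigma_finite_subalgebra M "F t" using sfs assms by auto
  show ?thesis by (rule measurable_from_subalg[OF subalg assms(3)])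
qed

lemma nc0: assumes M: "prob_on T F M" and f: "f \<in> borel_measurable M" and w: "w \<in> \<Omega>"
  shows "nn_cond_exp M (F 0) f w = (\<integral>\<^sup>+ x. f x \<partial>M)"
proof -
  interpret sigma_finite_subalgebra M "F 0" using sfs M zeroT by auto
  interpret P: prob_space M using M unfolding prob_on_def by auto
  have spM: "space M = \<Omega>" using M unfolding prob_on_def by auto
  have cst: "nn_cond_exp M (F 0) f x = nn_cond_exp M (F 0) f w" if "x \<in> \<Omega>" for x
    using const0[OF borel_measurable_nn_cond_exp that w] .
  have "(\<integral>\<^sup>+ x. f x \<partial>M) = (\<integral>\<^sup>+ x. 1 * f x \<partial>M)" by simp
  also have "\<dots> = (\<integral>\<^sup>+ x. 1 * nn_cond_exp M (F 0) f x \<partial>M)"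
    by (rule nn_cond_exp_intg[symmetric]) (auto simp: f)
  also have "\<dots> = (\<integral>\<^sup>+ x. nn_cond_exp M (F 0) f w \<partial>M)"
    using cst spM by (intro nn_integral_cong) auto
  also have "\<dots> = nn_cond_exp M (F 0) f w" using P.emeasure_space_1 by simp
  finally show ?thesis by simp
qed

lemma inv_le1: "1 \<le> (x::ennreal) \<Longrightarrow> inverse x \<le> 1"
  by (metis divide_ennreal_def divide_le_posI_ennreal
    dual_order.strict_trans1 ennreal_zero_less_one
    verit_prod_simplify(1,2))

lemma sb_le1: assumes "t \<in> {0..T}" "w \<in> \<Omega>" "i \<in> {1..d}"
  shows "ennreal (basket d S i t w) \<le> 1"
proof -
  interpret xm d "S t w" using Sem assms by auto
  show ?thesis unfolding sb_eq[OF assms] ib_def using rs_ge1[OF assms(3)] by (rule inv_le1)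
qed

lemma basket_nn: "basket d S i t w \<ge> 0" unfolding basket_def by simp

lemma bm: "prob_on T F M \<Longrightarrow> t \<in> {0..T} \<Longrightarrow> i \<in> {1..d} \<Longrightarrow>
   (\<lambda>w. basket d S i t w) \<in> borel_measurable M"
  using mFt basket_meas by blast

lemma sbm: "prob_on T F M \<Longrightarrow> t \<in> {0..T} \<Longrightarrow> i \<in> {1..d} \<Longrightarrow>
   (\<lambda>w. ennreal (basket d S i t w)) \<in> borel_measurable M"
  using bm by (intro measurable_compose[OF _ measurable_ennreal]) auto

lemma mind: "f \<in> borel_measurable M \<Longrightarrow> A \<in> sets M \<Longrightarrow> (\<lambda>w. f w * indicator A w :: ennreal) \<in> borel_measurable M"
  by (intro borel_measurable_times_ennreal) auto

lemma val_nc: assumes V: "valuation_measure d T F S Qb" and i: "i \<in> {1..d}"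
    and st: "0 \<le> s" "s \<le> t" "t \<le> T"
  shows "AE w in Qb. nn_cond_exp Qb (F s) (\<lambda>w. ennreal (basket d S i t w)) w = ennreal (basket d S i s w)"
proof -
  have P: "prob_on T F Qb" using V unfolding valuation_measure_def by auto
  have s: "s \<in> {0..T}" and t: "t \<in> {0..T}" using st by auto
  interpret sigma_finite_subalgebra Qb "F s" using sfs P s by auto
  interpret PS: prob_space Qb using P unfolding prob_on_def by auto
  have spQ: "space Qb = \<Omega>" using P unfolding prob_on_def by auto
  have fm: "(\<lambda>w. basket d S i t w) \<in> borel_measurable Qb" using bm P t i by auto
  have A1: "AE w in Qb. real_cond_exp Qb (F s) (basket d S i t) w = basket d S i s w"
  proof -
    have "\<forall>i\<in>{1..d}. \<forall>s t. 0 \<le> s \<and> s \<le> t \<and> t \<le> T \<longrightarrow>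
        (AE w in Qb. real_cond_exp Qb (F s) (basket d S i t) w = basket d S i s w)"
      using V unfolding valuation_measure_def by blast
    then show ?thesis using i st by blast
  qed
  have A2: "AE w in Qb. real_cond_exp Qb (F s) (basket d S i t) w = enn2real (nn_cond_exp Qb (F s) (\<lambda>w. ennreal (basket d S i t w)) w)"
    using rce_nn[OF fm basket_nn] by simp
  have "(\<integral>\<^sup>+ w. nn_cond_exp Qb (F s) (\<lambda>w. ennreal (basket d S i t w)) w \<partial>Qb)
      = (\<integral>\<^sup>+ w. 1 * nn_cond_exp Qb (F s) (\<lambda>w. ennreal (basket d S i t w)) w \<partial>Qb)" by simp
  also have "\<dots> = (\<integral>\<^sup>+ w. 1 * ennreal (basket d S i t w) \<partial>Qb)"
    using fm by (intro nn_cond_exp_intg) auto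
  also have "\<dots> \<le> (\<integral>\<^sup>+ w. 1 \<partial>Qb)"
    using sb_le1[OF t _ i] spQ by (intro nn_integral_mono) auto
  also have "\<dots> = 1" using PS.emeasure_space_1 by simp
  finally have "(\<integral>\<^sup>+ w. nn_cond_exp Qb (F s) (\<lambda>w. ennreal (basket d S i t w)) w \<partial>Qb) \<noteq> \<infinity>"
    by (auto simp: top_unique)
  then have A3: "AE w in Qb. nn_cond_exp Qb (F s) (\<lambda>w. ennreal (basket d S i t w)) w \<noteq> \<infinity>"
    by (intro nn_integral_PInf_AE) auto
  show ?thesis using A1 A2 A3
  proof eventually_elim
    case (elim w)
    let ?n = "nn_cond_exp Qb (F s) (\<lambda>w. ennreal (basket d S i t w)) w"
    have e1: "enn2real ?n = basket d S i s w" using elim(1,2) by simp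
    have "?n = ennreal (enn2real ?n)" using elim(3) by (intro ennreal_enn2real[symmetric]) (simp add: less_top[symmetric])
    also have "\<dots> = ennreal (basket d S i s w)" by (simp only: e1)
    finally show ?case .
  qed
qed

lemma tower: assumes V: "valuation_measure d T F S Qb" and i: "i \<in> {1..d}"
    and t: "t \<in> {0..T}" and g: "g \<in> borel_measurable (F t)"
  shows "(\<integral>\<^sup>+ w. g w * ennreal (basket d S i T w) \<partial>Qb) = (\<integral>\<^sup>+ w. g w * ennreal (basket d S i t w) \<partial>Qb)"
proof -
  have P: "prob_on T F Qb" using V unfolding valuation_measure_def by auto
  interpret sigma_finite_subalgebra Qb "F t" using sfs P t by auto
  have fm: "(\<lambda>w. ennreal (basket d S i T w)) \<in> borel_measurable Qb" using bm P zeroT i by auto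
  have "(\<integral>\<^sup>+ w. g w * ennreal (basket d S i T w) \<partial>Qb)
     = (\<integral>\<^sup>+ w. g w * nn_cond_exp Qb (F t) (\<lambda>w. ennreal (basket d S i T w)) w \<partial>Qb)"
    by (rule nn_cond_exp_intg[symmetric]) (use g fm in auto)
  also have "\<dots> = (\<integral>\<^sup>+ w. g w * ennreal (basket d S i t w) \<partial>Qb)"
    using val_nc[OF V i, of t T] t by (intro nn_integral_cong_AE) (auto elim!: eventually_mono)
  finally show ?thesis .
qed

lemma val_of_nc: assumes P: "prob_on T F Qb"
  and H: "\<And>i s t. i \<in> {1..d} \<Longrightarrow> 0 \<le> s \<Longrightarrow> s \<le> t \<Longrightarrow> t \<le> T \<Longrightarrow>
     AE w in Qb. nn_cond_exp Qb (F s) (\<lambda>w. ennreal (basket d S i t w)) w = ennreal (basket d S i s w)"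
  shows "valuation_measure d T F S Qb"
  unfolding valuation_measure_def
proof (intro conjI P ballI allI impI)
  fix i s t assume i: "i \<in> {1..d}" and st: "0 \<le> s \<and> s \<le> t \<and> t \<le> T"
  have s: "s \<in> {0..T}" and t: "t \<in> {0..T}" using st by auto
  interpret sigma_finite_subalgebra Qb "F s" using sfs P s by auto
  have fm: "(\<lambda>w. basket d S i t w) \<in> borel_measurable Qb" using bm P t i by auto
  show "AE w in Qb. real_cond_exp Qb (F s) (basket d S i t) w = basket d S i s w"
  proof -
    have A1: "AE w in Qb. nn_cond_exp Qb (F s) (\<lambda>w. ennreal (basket d S i t w)) w = ennreal (basket d S i s w)"
      using H[OF i] st by auto
    show ?thesis using rce_nn[OF fm basket_nn] A1
    proof eventually_elim
      case (elim w) then show ?case using basket_nn[of i s w] by simp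
    qed
  qed
qed

lemma prob_on_ne: "prob_on T F M \<Longrightarrow> \<exists>w. w \<in> \<Omega>"
  unfolding prob_on_def using prob_space.not_empty by fastforce

lemma prob_on_sp: "prob_on T F M \<Longrightarrow> space M = \<Omega>" unfolding prob_on_def by auto
lemma prob_on_sets: "prob_on T F M \<Longrightarrow> sets M = sets (F T)" unfolding prob_on_def by auto

lemma NC_parts: assumes "numeraire_consistent d T F S Q"
  shows "\<And>i. i \<in> {1..d} \<Longrightarrow> prob_on T F (Q i)"
    "\<And>i j t A w0. i \<in> {1..d} \<Longrightarrow> j \<in> {1..d} \<Longrightarrow> t \<in> {0..T} \<Longrightarrow> A \<in> sets (F t) \<Longrightarrow> w0 \<in> \<Omega> \<Longrightarrow>
        (\<integral>\<^sup>+ w. S t w i j * indicator A w \<partial>(Q i)) =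
        S 0 w0 i j * emeasure (Q j) (A \<inter> {w\<in>\<Omega>. S t w j i > 0})"
  using assms unfolding numeraire_consistent_def by blast+

lemma Bset: "t \<in> {0..T} \<Longrightarrow> i \<in> {1..d} \<Longrightarrow> j \<in> {1..d} \<Longrightarrow> {w\<in>\<Omega>. S t w j i > 0} \<in> sets (F t)"
proof -
  assume t: "t \<in> {0..T}" and i: "i \<in> {1..d}" and j: "j \<in> {1..d}"
  have sp: "space (F t) = \<Omega>" using spF t by blast
  have "{w\<in>space (F t). S t w j i > 0} \<in> sets (F t)"
    using Smeas[OF t j i] by measurable
  then show ?thesis by (simp only: sp)
qed

lemma NCfun: assumes NC: "numeraire_consistent d T F S Q" and i: "i \<in> {1..d}" and j: "j \<in> {1..d}"
  and t: "t \<in> {0..T}" and w0: "w0 \<in> \<Omega>" and f: "f \<in> borel_measurable (F t)"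
  shows "(\<integral>\<^sup>+ w. S t w i j * f w \<partial>Q i) =
     S 0 w0 i j * (\<integral>\<^sup>+ w. indicator {w\<in>\<Omega>. S t w j i > 0} w * f w \<partial>Q j)"
proof -
  let ?B = "{w\<in>\<Omega>. S t w j i > 0}"
  have Pi: "prob_on T F (Q i)" and Pj: "prob_on T F (Q j)" using NC_parts(1)[OF NC] i j by auto
  have sp: "space (F t) = \<Omega>" using spF t by blast
  have mS: "(\<lambda>w. S t w i j) \<in> borel_measurable (Q i)" using mFt[OF Pi t Smeas[OF t i j]] .
  have BT: "?B \<in> sets (F t)" using Bset[OF t i j] .
  have BQ: "?B \<in> sets (Q j)" using BT setsFT[OF t] prob_on_sets[OF Pj] by auto
  have mB: "indicator ?B \<in> borel_measurable (Q j)" using BQ by simp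
  show ?thesis
  proof (induction rule: borel_measurable_induct[OF f, case_names cong set mult add sup])
    case (cong f g)
    have eq: "\<And>x. x \<in> \<Omega> \<Longrightarrow> f x = g x" using cong(3) sp by simp
    have "(\<integral>\<^sup>+ w. S t w i j * f w \<partial>Q i) = (\<integral>\<^sup>+ w. S t w i j * g w \<partial>Q i)"
      using eq prob_on_sp[OF Pi] by (intro nn_integral_cong) simp
    moreover have "(\<integral>\<^sup>+ w. indicator ?B w * f w \<partial>Q j) = (\<integral>\<^sup>+ w. indicator ?B w * g w \<partial>Q j)"
      using eq prob_on_sp[OF Pj] by (intro nn_integral_cong) simp
    ultimately show ?case using cong(4) by simp
  next
    case (set A)
    have AQ: "A \<inter> ?B \<in> sets (Q j)" using set BT setsFT[OF t] prob_on_sets[OF Pj] by auto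
    have "(\<integral>\<^sup>+ w. indicator ?B w * indicator A w \<partial>Q j) = (\<integral>\<^sup>+ w. indicator (A \<inter> ?B) w \<partial>Q j)"
      by (intro nn_integral_cong) (simp add: indicator_inter_arith mult.commute)
    also have "\<dots> = emeasure (Q j) (A \<inter> ?B)" using AQ by simp
    finally show ?case using NC_parts(2)[OF NC i j t set w0] by simp
  next
    case (mult u k)
    have muF: "u \<in> borel_measurable (F t)" by fact
    have IH: "(\<integral>\<^sup>+ w. S t w i j * u w \<partial>Q i) = S 0 w0 i j * (\<integral>\<^sup>+ w. indicator ?B w * u w \<partial>Q j)" by fact
    have mui: "u \<in> borel_measurable (Q i)" and muj: "u \<in> borel_measurable (Q j)"
      using mFt[OF Pi t muF] mFt[OF Pj t muF] .
    have "(\<integral>\<^sup>+ w. S t w i j * (k * u w) \<partial>Q i) = (\<integral>\<^sup>+ w. k * (S t w i j * u w) \<partial>Q i)"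
      by (simp add: mult.left_commute)
    also have "\<dots> = k * (\<integral>\<^sup>+ w. S t w i j * u w \<partial>Q i)"
      using mS mui by (intro nn_integral_cmult borel_measurable_times_ennreal)
    also have "\<dots> = S 0 w0 i j * (k * (\<integral>\<^sup>+ w. indicator ?B w * u w \<partial>Q j))"
      unfolding IH by (simp add: mult.left_commute)
    also have "k * (\<integral>\<^sup>+ w. indicator ?B w * u w \<partial>Q j) = (\<integral>\<^sup>+ w. k * (indicator ?B w * u w) \<partial>Q j)"
      using mB muj by (intro nn_integral_cmult[symmetric] borel_measurable_times_ennreal)
    also have "\<dots> = (\<integral>\<^sup>+ w. indicator ?B w * (k * u w) \<partial>Q j)"
      by (simp add: mult.left_commute)
    finally show ?case .
  next
    case (add u v)
    have muF: "u \<in> borel_measurable (F t)" "v \<in> borel_measurable (F t)" by fact+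
    have IH: "(\<integral>\<^sup>+ w. S t w i j * u w \<partial>Q i) = S 0 w0 i j * (\<integral>\<^sup>+ w. indicator ?B w * u w \<partial>Q j)"
      "(\<integral>\<^sup>+ w. S t w i j * v w \<partial>Q i) = S 0 w0 i j * (\<integral>\<^sup>+ w. indicator ?B w * v w \<partial>Q j)" by fact+
    have mui: "u \<in> borel_measurable (Q i)" "v \<in> borel_measurable (Q i)"
      using mFt[OF Pi t muF(1)] mFt[OF Pi t muF(2)] .
    have muj: "u \<in> borel_measurable (Q j)" "v \<in> borel_measurable (Q j)"
      using mFt[OF Pj t muF(1)] mFt[OF Pj t muF(2)] .
    have "(\<integral>\<^sup>+ w. S t w i j * (v w + u w) \<partial>Q i) = (\<integral>\<^sup>+ w. S t w i j * v w + S t w i j * u w \<partial>Q i)"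
      by (simp add: distrib_left)
    also have "\<dots> = (\<integral>\<^sup>+ w. S t w i j * v w \<partial>Q i) + (\<integral>\<^sup>+ w. S t w i j * u w \<partial>Q i)"
      using mS mui by (intro nn_integral_add borel_measurable_times_ennreal)
    also have "\<dots> = S 0 w0 i j * ((\<integral>\<^sup>+ w. indicator ?B w * v w \<partial>Q j) + (\<integral>\<^sup>+ w. indicator ?B w * u w \<partial>Q j))"
      unfolding IH by (simp add: distrib_left)
    also have "(\<integral>\<^sup>+ w. indicator ?B w * v w \<partial>Q j) + (\<integral>\<^sup>+ w. indicator ?B w * u w \<partial>Q j)
        = (\<integral>\<^sup>+ w. indicator ?B w * v w + indicator ?B w * u w \<partial>Q j)"
      using mB muj by (intro nn_integral_add[symmetric] borel_measurable_times_ennreal)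
    also have "\<dots> = (\<integral>\<^sup>+ w. indicator ?B w * (v w + u w) \<partial>Q j)"
      by (simp add: distrib_left)
    finally show ?case .
  next
    case (sup U)
    have muF: "\<And>n. U n \<in> borel_measurable (F t)" by fact
    have IH: "\<And>n. (\<integral>\<^sup>+ w. S t w i j * U n w \<partial>Q i) = S 0 w0 i j * (\<integral>\<^sup>+ w. indicator ?B w * U n w \<partial>Q j)" by fact
    have inc: "incseq U" by fact
    have mui: "\<And>n. U n \<in> borel_measurable (Q i)" using mFt[OF Pi t muF] .
    have muj: "\<And>n. U n \<in> borel_measurable (Q j)" using mFt[OF Pj t muF] .
    have "(\<integral>\<^sup>+ w. S t w i j * (\<Squnion> range U) w \<partial>Q i) = (\<integral>\<^sup>+ w. (\<Squnion>n. S t w i j * U n w) \<partial>Q i)"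
      unfolding SUP_apply by (simp add: SUP_mult_left_ennreal)
    also have "\<dots> = (\<Squnion>n. (\<integral>\<^sup>+ w. S t w i j * U n w \<partial>Q i))"
    proof (rule nn_integral_monotone_convergence_SUP)
      show "incseq (\<lambda>n w. S t w i j * U n w)"
        using inc unfolding incseq_def le_fun_def by (auto intro: mult_left_mono)
    qed (use mS mui in \<open>auto intro: borel_measurable_times_ennreal\<close>)
    also have "\<dots> = S 0 w0 i j * (\<Squnion>n. (\<integral>\<^sup>+ w. indicator ?B w * U n w \<partial>Q j))"
      unfolding IH by (simp add: SUP_mult_left_ennreal)
    also have "(\<Squnion>n. (\<integral>\<^sup>+ w. indicator ?B w * U n w \<partial>Q j)) = (\<integral>\<^sup>+ w. (\<Squnion>n. indicator ?B w * U n w) \<partial>Q j)"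
    proof (rule nn_integral_monotone_convergence_SUP[symmetric])
      show "incseq (\<lambda>n w. indicator ?B w * U n w)"
        using inc unfolding incseq_def le_fun_def by (auto intro: mult_left_mono)
    qed (use mB muj in \<open>auto intro: borel_measurable_times_ennreal\<close>)
    also have "\<dots> = (\<integral>\<^sup>+ w. indicator ?B w * (\<Squnion> range U) w \<partial>Q j)"
      unfolding SUP_apply by (simp add: SUP_mult_left_ennreal)
    finally show ?case .
  qed
qed

lemma null_inact: assumes NC: "numeraire_consistent d T F S Q" and i: "i \<in> {1..d}" and t: "t \<in> {0..T}"
  shows "AE w in Q i. i \<in> actm d (S t w)"
proof -
  have Pi: "prob_on T F (Q i)" using NC_parts(1)[OF NC i] .
  obtain w0 where w0: "w0 \<in> \<Omega>" using prob_on_ne[OF Pi] by auto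
  have sp: "space (F t) = \<Omega>" using spF t by blast
  have AEk: "AE w in Q i. S t w i k \<noteq> \<top>" if k: "k \<in> {1..d}" for k
  proof -
    let ?A = "{w\<in>\<Omega>. S t w i k = \<top>}"
    have "{w\<in>space (F t). S t w i k = \<top>} \<in> sets (F t)" using Smeas[OF t i k] by measurable
    then have AF: "?A \<in> sets (F t)" by (simp only: sp)
    then have AQ: "?A \<in> sets (Q i)" using setsFT[OF t] prob_on_sets[OF Pi] by auto
    have Pk: "prob_on T F (Q k)" using NC_parts(1)[OF NC k] .
    interpret Pk: prob_space "Q k" using Pk unfolding prob_on_def by auto
    have "(\<integral>\<^sup>+ w. S t w i k * indicator ?A w \<partial>Q i) = (\<integral>\<^sup>+ w. \<top> * indicator ?A w \<partial>Q i)"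
      by (intro nn_integral_cong) (auto split: split_indicator)
    also have "\<dots> = \<top> * emeasure (Q i) ?A" using AQ by (simp add: nn_integral_cmult)
    finally have "\<top> * emeasure (Q i) ?A = S 0 w0 i k * emeasure (Q k) (?A \<inter> {w\<in>\<Omega>. S t w k i > 0})"
      using NC_parts(2)[OF NC i k t AF w0] by simp
    also have "\<dots> < \<top>" using S0_fin[OF w0 i k]
      by (simp add: ennreal_mult_eq_top_iff Pk.emeasure_finite less_top[symmetric])
    finally have "emeasure (Q i) ?A = 0" by (auto simp: ennreal_top_mult split: if_splits)
    then have "?A \<in> null_sets (Q i)" using AQ by auto
    then show ?thesis by (rule AE_I') (use prob_on_sp[OF Pi] in auto)
  qed
  then have "AE w in Q i. \<forall>k\<in>{1..d}. S t w i k \<noteq> \<top>" by (subst AE_finite_all) auto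
  then show ?thesis
    by (rule eventually_mono) (use i in \<open>auto simp: actm_def rs_def ennreal_sum_less_top less_top\<close>)
qed

lemma SYM: assumes NC: "numeraire_consistent d T F S Q" and i: "i \<in> {1..d}" and j: "j \<in> {1..d}"
  and t: "t \<in> {0..T}" and g: "g \<in> borel_measurable (F t)"
  shows "ennreal (c i) * (\<integral>\<^sup>+ w. g w * ennreal (basket d S j t w) \<partial>Q i)
       = ennreal (c j) * (\<integral>\<^sup>+ w. g w * ennreal (basket d S i t w) \<partial>Q j)"
proof -
  have Pi: "prob_on T F (Q i)" and Pj: "prob_on T F (Q j)" using NC_parts(1)[OF NC] i j by auto
  obtain w0 where w0: "w0 \<in> \<Omega>" using prob_on_ne[OF Pi] by auto
  have fF: "(\<lambda>w. g w * ennreal (basket d S i t w)) \<in> borel_measurable (F t)"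
    using g basket_meas[OF t i] by measurable
  have N: "(\<integral>\<^sup>+ w. S t w i j * (g w * ennreal (basket d S i t w)) \<partial>Q i) =
     S 0 w0 i j * (\<integral>\<^sup>+ w. indicator {w\<in>\<Omega>. S t w j i > 0} w * (g w * ennreal (basket d S i t w)) \<partial>Q j)"
    using NCfun[OF NC i j t w0 fF] .
  have L: "(\<integral>\<^sup>+ w. S t w i j * (g w * ennreal (basket d S i t w)) \<partial>Q i) = (\<integral>\<^sup>+ w. g w * ennreal (basket d S j t w) \<partial>Q i)"
  proof (rule nn_integral_cong_AE)
    show "AE w in Q i. S t w i j * (g w * ennreal (basket d S i t w)) = g w * ennreal (basket d S j t w)"
      using null_inact[OF NC i t] AE_space
    proof eventually_elim
      case (elim w)
      then have w: "w \<in> \<Omega>" using prob_on_sp[OF Pi] by simp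
      interpret xm d "S t w" using Sem t w by auto
      have "S t w j i \<noteq> 0" using act_col elim(1) j by auto
      then have "S t w i j * ib i = ib j" using key[OF i j] by simp
      then show ?case using sb_eq[OF t w i] sb_eq[OF t w j] by (simp add: mult_ac)
    qed
  qed
  have R: "(\<integral>\<^sup>+ w. indicator {w\<in>\<Omega>. S t w j i > 0} w * (g w * ennreal (basket d S i t w)) \<partial>Q j)
     = (\<integral>\<^sup>+ w. g w * ennreal (basket d S i t w) \<partial>Q j)"
  proof (rule nn_integral_cong)
    fix w assume "w \<in> space (Q j)"
    then have w: "w \<in> \<Omega>" using prob_on_sp[OF Pj] by simp
    interpret xm d "S t w" using Sem t w by auto
    show "indicator {w\<in>\<Omega>. S t w j i > 0} w * (g w * ennreal (basket d S i t w)) = g w * ennreal (basket d S i t w)"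
    proof (cases "i \<in> actm d (S t w)")
      case True
      then have "S t w j i \<noteq> 0" using act_col j by auto
      then have "S t w j i > 0" by (simp add: zero_less_iff_neq_zero)
      then show ?thesis using w by simp
    next
      case False
      then show ?thesis using ib_inact[OF False i] sb_eq[OF t w i] by simp
    qed
  qed
  have "ennreal (c i) * (\<integral>\<^sup>+ w. g w * ennreal (basket d S j t w) \<partial>Q i)
     = (S 0 w0 i j * ennreal (c i)) * (\<integral>\<^sup>+ w. g w * ennreal (basket d S i t w) \<partial>Q j)"
  proof -
    have E: "(\<integral>\<^sup>+ w. g w * ennreal (basket d S j t w) \<partial>Q i) = S 0 w0 i j * (\<integral>\<^sup>+ w. g w * ennreal (basket d S i t w) \<partial>Q j)"
      using N unfolding L R .
    show ?thesis unfolding E by (simp add: mult_ac)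
  qed
  also have "\<dots> = ennreal (c j) * (\<integral>\<^sup>+ w. g w * ennreal (basket d S i t w) \<partial>Q j)"
    using key0[OF w0 i j] by simp
  finally show ?thesis .
qed

lemma cinv: "i \<in> {1..d} \<Longrightarrow> w \<in> \<Omega> \<Longrightarrow> ennreal (c i) * ennreal (1 / c i) = 1"
  using c_pos[of w i] by (simp add: ennreal_mult[symmetric])

definition DENS :: "(nat \<Rightarrow> 'a measure) \<Rightarrow> 'a measure \<Rightarrow> bool" where
  "DENS Q Qb \<longleftrightarrow> (\<forall>i\<in>{1..d}. \<forall>A\<in>sets (F T).
     ennreal (c i) * emeasure (Q i) A = (\<integral>\<^sup>+ w. ennreal (basket d S i T w) * indicator A w \<partial>Qb))"

definition Zf :: "nat \<Rightarrow> 'a \<Rightarrow> ennreal" where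
  "Zf i w = ennreal (1 / c i) * ennreal (basket d S i T w)"

lemma Zf_meas: "prob_on T F M \<Longrightarrow> i \<in> {1..d} \<Longrightarrow> Zf i \<in> borel_measurable M"
  unfolding Zf_def using sbm[of M T i] zeroT by (intro borel_measurable_times_ennreal) auto

lemma sb_Zf: "i \<in> {1..d} \<Longrightarrow> w0 \<in> \<Omega> \<Longrightarrow> ennreal (basket d S i T w) = ennreal (c i) * Zf i w"
  unfolding Zf_def using cinv by (simp add: mult.assoc[symmetric])

lemma dens_density: assumes Pb: "prob_on T F Qb" and Pi: "prob_on T F (Q i)" and D: "DENS Q Qb" and i: "i \<in> {1..d}"
  shows "Q i = density Qb (Zf i)"
proof (rule measure_eqI)
  obtain w0 where w0: "w0 \<in> \<Omega>" using prob_on_ne[OF Pb] by auto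
  show "sets (Q i) = sets (density Qb (Zf i))" using Pi Pb unfolding prob_on_def by simp
  fix A assume A: "A \<in> sets (Q i)"
  then have AT: "A \<in> sets (F T)" using Pi unfolding prob_on_def by simp
  have AQ: "A \<in> sets Qb" using AT Pb unfolding prob_on_def by simp
  have "emeasure (density Qb (Zf i)) A = (\<integral>\<^sup>+ w. Zf i w * indicator A w \<partial>Qb)"
    using AQ Zf_meas[OF Pb i] by (simp add: emeasure_density)
  also have "\<dots> = (\<integral>\<^sup>+ w. ennreal (1 / c i) * (ennreal (basket d S i T w) * indicator A w) \<partial>Qb)"
    unfolding Zf_def by (simp add: mult.assoc)
  also have "\<dots> = ennreal (1 / c i) * (\<integral>\<^sup>+ w. ennreal (basket d S i T w) * indicator A w \<partial>Qb)"
    using mind[OF sbm[OF Pb zeroT(2) i] AQ] by (intro nn_integral_cmult)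
  also have "\<dots> = ennreal (1 / c i) * (ennreal (c i) * emeasure (Q i) A)"
    using D AT i unfolding DENS_def by simp
  also have "\<dots> = (ennreal (c i) * ennreal (1 / c i)) * emeasure (Q i) A" by (simp only: ac_simps)
  also have "\<dots> = emeasure (Q i) A" by (simp only: cinv[OF i w0] mult_1)
  finally show "emeasure (Q i) A = emeasure (density Qb (Zf i)) A" by simp
qed

lemma sum_sb1: "t \<in> {0..T} \<Longrightarrow> w \<in> \<Omega> \<Longrightarrow> (\<Sum>i\<in>{1..d}. ennreal (basket d S i t w)) = 1"
proof -
  assume t: "t \<in> {0..T}" and w: "w \<in> \<Omega>"
  interpret xm d "S t w" using Sem t w by auto
  have "(\<Sum>i\<in>{1..d}. ennreal (basket d S i t w)) = (\<Sum>i\<in>{1..d}. ib i)"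
    using sb_eq[OF t w] by (intro sum.cong) auto
  also have "\<dots> = 1" using sum_ib d by simp
  finally show ?thesis .
qed

lemma dens_sum: assumes Pb: "prob_on T F Qb" and D: "DENS Q Qb" and A: "A \<in> sets (F T)"
  shows "emeasure Qb A = (\<Sum>i\<in>{1..d}. ennreal (c i) * emeasure (Q i) A)"
proof -
  have AQ: "A \<in> sets Qb" using A Pb unfolding prob_on_def by simp
  have "(\<Sum>i\<in>{1..d}. ennreal (c i) * emeasure (Q i) A) = (\<Sum>i\<in>{1..d}. \<integral>\<^sup>+ w. ennreal (basket d S i T w) * indicator A w \<partial>Qb)"
    using D A unfolding DENS_def by (intro sum.cong) auto
  also have "\<dots> = (\<integral>\<^sup>+ w. (\<Sum>i\<in>{1..d}. ennreal (basket d S i T w) * indicator A w) \<partial>Qb)"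
    by (rule nn_integral_sum[symmetric]) (use mind[OF sbm[OF Pb zeroT(2)] AQ] in auto)
  also have "\<dots> = (\<integral>\<^sup>+ w. indicator A w \<partial>Qb)"
  proof (rule nn_integral_cong)
    fix w assume "w \<in> space Qb"
    then have w: "w \<in> \<Omega>" using prob_on_sp[OF Pb] by simp
    show "(\<Sum>i\<in>{1..d}. ennreal (basket d S i T w) * indicator A w) = indicator A w"
      using sum_sb1[OF zeroT(2) w] by (simp add: sum_distrib_right[symmetric])
  qed
  also have "\<dots> = emeasure Qb A" using AQ by simp
  finally show ?thesis by simp
qed

lemma dens_equiv: assumes Pb: "prob_on T F Qb" and D: "DENS Q Qb"
  shows "equiv_sum d T F Q Qb"
  unfolding equiv_sum_def
proof
  fix A assume A: "A \<in> sets (F T)"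
  obtain w0 where w0: "w0 \<in> \<Omega>" using prob_on_ne[OF Pb] by auto
  have cp: "\<And>i. i \<in> {1..d} \<Longrightarrow> ennreal (c i) \<noteq> 0" using c_pos[OF w0] by (simp add: ennreal_eq_0_iff not_le)
  show "(emeasure Qb A = 0) = (\<forall>i\<in>{1..d}. emeasure (Q i) A = 0)"
    unfolding dens_sum[OF Pb D A] using cp by (simp add: sum_eq_0_iff)
qed

end

context mk
begin

lemma bayes2: assumes V: "valuation_measure d T F S Qb" and i: "i \<in> {1..d}"
  and Pi: "prob_on T F (Q i)" and Qi: "Q i = density Qb (Zf i)" and r: "r \<in> {0..T}"
  and X: "X \<in> borel_measurable Qb"
  shows "AE w in Qb. nn_cond_exp Qb (F r) (\<lambda>x. ennreal (basket d S i T x) * X x) w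
       = ennreal (basket d S i r w) * nn_cond_exp (Q i) (F r) X w"
proof -
  have Pb: "prob_on T F Qb" using V unfolding valuation_measure_def by auto
  obtain w0 where w0: "w0 \<in> \<Omega>" using prob_on_ne[OF Pb] by auto
  interpret sM: sigma_finite_subalgebra Qb "F r" using sfs[OF Pb r] .
  have sQ: "sigma_finite_subalgebra (density Qb (Zf i)) (F r)" using sfs[OF Pi r] Qi by simp
  have Zm: "Zf i \<in> borel_measurable Qb" using Zf_meas[OF Pb i] .
  have ZXm: "(\<lambda>x. Zf i x * X x) \<in> borel_measurable Qb" using Zm X by (intro borel_measurable_times_ennreal)
  have B: "AE x in Qb. nn_cond_exp Qb (F r) (\<lambda>x. Zf i x * X x) x
     = nn_cond_exp Qb (F r) (Zf i) x * nn_cond_exp (density Qb (Zf i)) (F r) X x"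
    using bayes[OF sfs[OF Pb r] sQ Zm X] .
  have e1: "(\<lambda>x. ennreal (basket d S i T x) * X x) = (\<lambda>x. ennreal (c i) * (Zf i x * X x))"
    using sb_Zf[OF i w0] by (simp add: mult.assoc)
  have e2: "(\<lambda>x. ennreal (basket d S i T x)) = (\<lambda>x. ennreal (c i) * Zf i x)"
    using sb_Zf[OF i w0] by simp
  have C1: "AE x in Qb. nn_cond_exp Qb (F r) (\<lambda>x. ennreal (c i) * (Zf i x * X x)) x = ennreal (c i) * nn_cond_exp Qb (F r) (\<lambda>x. Zf i x * X x) x"
    using sM.nc_cmult[OF ZXm] .
  have C2: "AE x in Qb. nn_cond_exp Qb (F r) (\<lambda>x. ennreal (c i) * Zf i x) x = ennreal (c i) * nn_cond_exp Qb (F r) (Zf i) x"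
    using sM.nc_cmult[OF Zm] .
  have Vn: "AE x in Qb. nn_cond_exp Qb (F r) (\<lambda>x. ennreal (basket d S i T x)) x = ennreal (basket d S i r x)"
    using val_nc[OF V i, of r T] r by auto
  show ?thesis using B C1 C2 Vn
  proof eventually_elim
    case (elim x)
    have "nn_cond_exp Qb (F r) (\<lambda>x. ennreal (basket d S i T x) * X x) x
        = ennreal (c i) * (nn_cond_exp Qb (F r) (Zf i) x * nn_cond_exp (density Qb (Zf i)) (F r) X x)"
      unfolding e1 using elim(1,2) by simp
    also have "\<dots> = nn_cond_exp Qb (F r) (\<lambda>x. ennreal (basket d S i T x)) x * nn_cond_exp (density Qb (Zf i)) (F r) X x"
      unfolding e2 using elim(3) by (simp add: mult.assoc)
    also have "\<dots> = ennreal (basket d S i r x) * nn_cond_exp (Q i) (F r) X x"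
      using elim(4) Qi by simp
    finally show ?case .
  qed
qed

lemma card_filter: "finite A \<Longrightarrow> card {x\<in>A. P x} = (\<Sum>x\<in>A. if P x then 1 else 0)"
proof -
  assume f: "finite A"
  have "card {x\<in>A. P x} = (\<Sum>x\<in>{x\<in>A. P x}. 1)" by (rule card_eq_sum)
  also have "\<dots> = (\<Sum>x\<in>A. if P x then 1 else 0)" by (rule sum.inter_filter[OF f])
  finally show ?thesis .
qed

lemma card_act_meas: assumes t: "t \<in> {0..T}"
  shows "(\<lambda>x. of_nat (card (active d S t x)) :: ennreal) \<in> borel_measurable (F t)"
proof -
  have e: "(\<lambda>x. of_nat (card (active d S t x)) :: ennreal) =
      (\<lambda>x. \<Sum>j\<in>{1..d}. if (\<Sum>k\<in>{1..d}. S t x j k) < \<infinity> then 1 else 0)"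
  proof
    fix x
    have "card (active d S t x) = (\<Sum>j\<in>{1..d}. if (\<Sum>k\<in>{1..d}. S t x j k) < \<infinity> then 1 else 0)"
      unfolding active_def by (rule card_filter) simp
    then show "(of_nat (card (active d S t x)) :: ennreal) = (\<Sum>j\<in>{1..d}. if (\<Sum>k\<in>{1..d}. S t x j k) < \<infinity> then 1 else 0)"
      by (simp add: of_nat_sum) (intro sum.cong, auto)
  qed
  have "(\<lambda>x. \<Sum>j\<in>{1..d}. if (\<Sum>k\<in>{1..d}. S t x j k) < \<infinity> then 1 else (0::ennreal)) \<in> borel_measurable (F t)"
  proof (rule borel_measurable_sum)
    fix j assume j: "j \<in> {1..d}"
    have sm: "(\<lambda>x. \<Sum>k\<in>{1..d}. S t x j k) \<in> borel_measurable (F t)"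
      by (rule borel_measurable_sum) (use Smeas t j in auto)
    then have "{x\<in>space (F t). (\<Sum>k\<in>{1..d}. S t x j k) < \<infinity>} \<in> sets (F t)" by measurable
    then show "(\<lambda>x. if (\<Sum>k\<in>{1..d}. S t x j k) < \<infinity> then 1 else (0::ennreal)) \<in> borel_measurable (F t)"
      using sm by measurable
  qed
  then show ?thesis unfolding e .
qed

lemma Cbar_eq: assumes x: "x \<in> \<Omega>"
  shows "claim_bar d T S C x = (\<Sum>j\<in>{1..d}. ennreal (basket d S j T x) * (C x j / of_nat (card (active d S T x))))"
proof -
  interpret xm d "S T x" using Sem zeroT x by auto
  have "(\<Sum>j\<in>active d S T x. ennreal (basket d S j T x) * C x j) = (\<Sum>j\<in>{1..d}. ennreal (basket d S j T x) * C x j)"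
  proof (rule sum.mono_neutral_left)
    show "active d S T x \<subseteq> {1..d}" unfolding active_def by auto
    show "\<forall>j\<in>{1..d} - active d S T x. ennreal (basket d S j T x) * C x j = 0"
      using sb_eq[OF zeroT(2) x] ib_inact active_eq by auto
  qed auto
  then show ?thesis unfolding claim_bar_def divide_ennreal_def
    by (simp add: sum_distrib_right mult.assoc)
qed

lemma divm: "f \<in> borel_measurable M \<Longrightarrow> g \<in> borel_measurable M \<Longrightarrow> (\<lambda>x. f x / g x :: ennreal) \<in> borel_measurable M"
  unfolding divide_ennreal_def by (intro borel_measurable_times_ennreal borel_measurable_inverse_ennreal)

lemma claim_meas: assumes P: "prob_on T F M" and C: "C \<in> claims d T F S" and j: "j \<in> {1..d}"
  shows "(\<lambda>x. C x j) \<in> borel_measurable M"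
    "(\<lambda>x. C x j / of_nat (card (active d S T x))) \<in> borel_measurable M"
proof -
  have "(\<lambda>x. C x j) \<in> borel_measurable (F T)" using C j unfolding claims_def by auto
  then show m: "(\<lambda>x. C x j) \<in> borel_measurable M" using mFt[OF P zeroT(2)] by blast
  have "(\<lambda>x. of_nat (card (active d S T x)) :: ennreal) \<in> borel_measurable M"
    using mFt[OF P zeroT(2) card_act_meas[OF zeroT(2)]] .
  then show "(\<lambda>x. C x j / of_nat (card (active d S T x))) \<in> borel_measurable M" using m by (rule divm[rotated])
qed

lemma Cbar_meas: assumes P: "prob_on T F M" and C: "C \<in> claims d T F S"
  shows "claim_bar d T S C \<in> borel_measurable M"
proof -
  have "(\<lambda>x. \<Sum>j\<in>{1..d}. ennreal (basket d S j T x) * (C x j / of_nat (card (active d S T x)))) \<in> borel_measurable M"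
    using sbm[OF P zeroT(2)] claim_meas[OF P C]
    by (intro borel_measurable_sum borel_measurable_times_ennreal) auto
  moreover have "\<forall>x\<in>space M. claim_bar d T S C x = (\<Sum>j\<in>{1..d}. ennreal (basket d S j T x) * (C x j / of_nat (card (active d S T x))))"
    using Cbar_eq prob_on_sp[OF P] by auto
  ultimately show ?thesis using measurable_cong by (smt (verit))
qed

lemma STAR: assumes V: "valuation_measure d T F S Qb"
  and Qd: "\<And>i. i \<in> {1..d} \<Longrightarrow> prob_on T F (Q i) \<and> Q i = density Qb (Zf i)"
  and r: "r \<in> {0..T}" and C: "C \<in> claims d T F S"
  shows "star_identity d T F S Q Qb r C"
proof -
  have Pb: "prob_on T F Qb" using V unfolding valuation_measure_def by auto
  interpret sM: sigma_finite_subalgebra Qb "F r" using sfs[OF Pb r] .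
  define X where "X j x = C x j / of_nat (card (active d S T x))" for j x
  have Xm: "\<And>j. j \<in> {1..d} \<Longrightarrow> X j \<in> borel_measurable Qb" unfolding X_def using claim_meas(2)[OF Pb C] by auto
  have tm: "\<And>j. j \<in> {1..d} \<Longrightarrow> (\<lambda>x. ennreal (basket d S j T x) * X j x) \<in> borel_measurable Qb"
    using Xm sbm[OF Pb zeroT(2)] by (intro borel_measurable_times_ennreal) auto
  have sm: "(\<lambda>x. \<Sum>j\<in>{1..d}. ennreal (basket d S j T x) * X j x) \<in> borel_measurable Qb"
    using tm by (intro borel_measurable_sum) auto
  have A1: "AE x in Qb. nn_cond_exp Qb (F r) (claim_bar d T S C) x = nn_cond_exp Qb (F r) (\<lambda>x. \<Sum>j\<in>{1..d}. ennreal (basket d S j T x) * X j x) x"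
  proof (rule sM.nn_cond_exp_cong)
    show "AE x in Qb. claim_bar d T S C x = (\<Sum>j\<in>{1..d}. ennreal (basket d S j T x) * X j x)"
      using Cbar_eq prob_on_sp[OF Pb] unfolding X_def by (intro AE_I2) auto
  qed (use Cbar_meas[OF Pb C] sm in auto)
  have A2: "AE x in Qb. nn_cond_exp Qb (F r) (\<lambda>x. \<Sum>j\<in>{1..d}. ennreal (basket d S j T x) * X j x) x
     = (\<Sum>j\<in>{1..d}. nn_cond_exp Qb (F r) (\<lambda>x. ennreal (basket d S j T x) * X j x) x)"
    using sM.nc_sum_fin[of "{1..d}" "\<lambda>j x. ennreal (basket d S j T x) * X j x"] tm by auto
  have A3: "AE x in Qb. \<forall>j\<in>{1..d}. nn_cond_exp Qb (F r) (\<lambda>x. ennreal (basket d S j T x) * X j x) x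
     = ennreal (basket d S j r x) * nn_cond_exp (Q j) (F r) (X j) x"
  proof (subst AE_finite_all)
    show "\<forall>j\<in>{1..d}. AE x in Qb. nn_cond_exp Qb (F r) (\<lambda>x. ennreal (basket d S j T x) * X j x) x
     = ennreal (basket d S j r x) * nn_cond_exp (Q j) (F r) (X j) x"
      using bayes2[OF V _ _ _ r Xm] Qd by blast
  qed simp
  show ?thesis unfolding star_identity_def using A1 A2 A3 AE_space
  proof eventually_elim
    case (elim x)
    then have x: "x \<in> \<Omega>" using prob_on_sp[OF Pb] by simp
    interpret xm d "S r x" using Sem r x by auto
    have "nn_cond_exp Qb (F r) (claim_bar d T S C) x = (\<Sum>j\<in>{1..d}. ennreal (basket d S j r x) * nn_cond_exp (Q j) (F r) (X j) x)"
      using elim(1,2,3) by simp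
    also have "\<dots> = (\<Sum>j\<in>active d S r x. ennreal (basket d S j r x) * nn_cond_exp (Q j) (F r) (X j) x)"
    proof (rule sum.mono_neutral_right)
      show "active d S r x \<subseteq> {1..d}" unfolding active_def by auto
      show "\<forall>j\<in>{1..d} - active d S r x. ennreal (basket d S j r x) * nn_cond_exp (Q j) (F r) (X j) x = 0"
        using sb_eq[OF r x] ib_inact active_eq by auto
    qed auto
    finally show ?case unfolding X_def .
  qed
qed

end

context mk
begin

lemma dens_of: assumes Pb: "prob_on T F Qb" and j: "j \<in> {1..d}" and X: "X \<in> sets (F T)"
  shows "ennreal (c j) * emeasure (density Qb (Zf j)) X = (\<integral>\<^sup>+ w. ennreal (basket d S j T w) * indicator X w \<partial>Qb)"
proof -
  obtain w0 where w0: "w0 \<in> \<Omega>" using prob_on_ne[OF Pb] by auto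
  have XQ: "X \<in> sets Qb" using X prob_on_sets[OF Pb] by simp
  have "ennreal (c j) * emeasure (density Qb (Zf j)) X = ennreal (c j) * (\<integral>\<^sup>+ w. Zf j w * indicator X w \<partial>Qb)"
    using XQ Zf_meas[OF Pb j] by (simp add: emeasure_density)
  also have "\<dots> = (\<integral>\<^sup>+ w. ennreal (c j) * (Zf j w * indicator X w) \<partial>Qb)"
    using mind[OF Zf_meas[OF Pb j] XQ] by (intro nn_integral_cmult[symmetric])
  also have "\<dots> = (\<integral>\<^sup>+ w. ennreal (basket d S j T w) * indicator X w \<partial>Qb)"
    using sb_Zf[OF j w0] by (intro nn_integral_cong) (simp add: mult.assoc)
  finally show ?thesis .
qed

lemma qa_prob: assumes V: "valuation_measure d T F S Qb" and i: "i \<in> {1..d}"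
  shows "prob_on T F (density Qb (Zf i))"
proof -
  have Pb: "prob_on T F Qb" using V unfolding valuation_measure_def by auto
  obtain w0 where w0: "w0 \<in> \<Omega>" using prob_on_ne[OF Pb] by auto
  interpret PS: prob_space Qb using Pb unfolding prob_on_def by auto
  have spQ: "space Qb = \<Omega>" using prob_on_sp[OF Pb] .
  have OT: "\<Omega> \<in> sets (F T)" by simp
  have "ennreal (c i) * emeasure (density Qb (Zf i)) \<Omega> = (\<integral>\<^sup>+ w. ennreal (basket d S i T w) * indicator \<Omega> w \<partial>Qb)"
    using dens_of[OF Pb i OT] .
  also have "\<dots> = (\<integral>\<^sup>+ w. (\<lambda>_. 1) w * ennreal (basket d S i T w) \<partial>Qb)"
    using spQ by (intro nn_integral_cong) auto
  also have "\<dots> = (\<integral>\<^sup>+ w. (\<lambda>_. 1) w * ennreal (basket d S i 0 w) \<partial>Qb)"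
    by (rule tower[OF V i zeroT(1)]) simp
  also have "\<dots> = (\<integral>\<^sup>+ w. ennreal (c i) \<partial>Qb)"
    using c_eq[OF _ i] spQ by (intro nn_integral_cong) auto
  also have "\<dots> = ennreal (c i)" using PS.emeasure_space_1 by simp
  finally have e: "ennreal (c i) * emeasure (density Qb (Zf i)) \<Omega> = ennreal (c i) * 1" by simp
  have "emeasure (density Qb (Zf i)) \<Omega> = (ennreal (c i) * ennreal (1 / c i)) * emeasure (density Qb (Zf i)) \<Omega>"
    using cinv[OF i w0] by simp
  also have "\<dots> = ennreal (1 / c i) * (ennreal (c i) * emeasure (density Qb (Zf i)) \<Omega>)" by (simp only: ac_simps)
  also have "\<dots> = ennreal (c i) * ennreal (1 / c i)" unfolding e by (simp add: mult.commute)
  also have "\<dots> = 1" using cinv[OF i w0] .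
  finally have "emeasure (density Qb (Zf i)) \<Omega> = 1" .
  then have "prob_space (density Qb (Zf i))" using spQ by (intro prob_spaceI) simp
  then show ?thesis unfolding prob_on_def using Pb unfolding prob_on_def by simp
qed

lemma NC_of: assumes V: "valuation_measure d T F S Qb"
  and Qd: "\<And>i. i \<in> {1..d} \<Longrightarrow> prob_on T F (Q i) \<and> Q i = density Qb (Zf i)"
  shows "numeraire_consistent d T F S Q"
  unfolding numeraire_consistent_def
proof (intro conjI ballI)
  show "\<And>i. i \<in> {1..d} \<Longrightarrow> prob_on T F (Q i)" using Qd by blast
  have Pb: "prob_on T F Qb" using V unfolding valuation_measure_def by auto
  have spQ: "space Qb = \<Omega>" using prob_on_sp[OF Pb] .
  fix i j t A w0 assume i: "i \<in> {1..d}" and j: "j \<in> {1..d}" and t: "t \<in> {0..T}" and A: "A \<in> sets (F t)" and w0: "w0 \<in> \<Omega>"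
  let ?B = "{w\<in>\<Omega>. S t w j i > 0}"
  have AT: "A \<in> sets (F T)" using A setsFT[OF t] by auto
  have ABt: "A \<inter> ?B \<in> sets (F t)" using A Bset[OF t i j] by auto
  have ABT: "A \<inter> ?B \<in> sets (F T)" using ABt setsFT[OF t] by auto
  have gm: "(\<lambda>w. S t w i j * indicator A w) \<in> borel_measurable (F t)"
    using Smeas[OF t i j] A by (intro borel_measurable_times_ennreal) auto
  have gmQ: "(\<lambda>w. S t w i j * indicator A w) \<in> borel_measurable Qb" using mFt[OF Pb t gm] .
  have "(\<integral>\<^sup>+ w. S t w i j * indicator A w \<partial>Q i) = (\<integral>\<^sup>+ w. Zf i w * (S t w i j * indicator A w) \<partial>Qb)"
    using Qd[OF i] gmQ Zf_meas[OF Pb i] by (simp add: nn_integral_density)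
  also have "\<dots> = (\<integral>\<^sup>+ w. ennreal (1 / c i) * ((S t w i j * indicator A w) * ennreal (basket d S i T w)) \<partial>Qb)"
    unfolding Zf_def by (intro nn_integral_cong) (simp add: ac_simps)
  also have "\<dots> = ennreal (1 / c i) * (\<integral>\<^sup>+ w. (S t w i j * indicator A w) * ennreal (basket d S i T w) \<partial>Qb)"
    by (intro nn_integral_cmult borel_measurable_times_ennreal[OF gmQ sbm[OF Pb zeroT(2) i]])
  also have "(\<integral>\<^sup>+ w. (S t w i j * indicator A w) * ennreal (basket d S i T w) \<partial>Qb)
     = (\<integral>\<^sup>+ w. (S t w i j * indicator A w) * ennreal (basket d S i t w) \<partial>Qb)"
    using tower[OF V i t gm] .
  also have "\<dots> = (\<integral>\<^sup>+ w. indicator (A \<inter> ?B) w * ennreal (basket d S j t w) \<partial>Qb)"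
  proof (rule nn_integral_cong)
    fix w assume "w \<in> space Qb"
    then have w: "w \<in> \<Omega>" using spQ by simp
    interpret xm d "S t w" using Sem t w by auto
    have k: "S t w i j * ib i = ib j * (if S t w j i \<noteq> 0 then 1 else 0)" using key[OF i j] .
    show "S t w i j * indicator A w * ennreal (basket d S i t w) = indicator (A \<inter> ?B) w * ennreal (basket d S j t w)"
      using k w unfolding sb_eq[OF t w i] sb_eq[OF t w j]
      by (auto simp: indicator_def zero_less_iff_neq_zero mult_ac)
  qed
  also have "\<dots> = (\<integral>\<^sup>+ w. indicator (A \<inter> ?B) w * ennreal (basket d S j T w) \<partial>Qb)"
    using tower[OF V j t, of "indicator (A \<inter> ?B)"] ABt by simp
  also have "\<dots> = ennreal (c j) * emeasure (Q j) (A \<inter> ?B)"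
    using dens_of[OF Pb j ABT] Qd[OF j] by (simp add: mult.commute)
  finally have "(\<integral>\<^sup>+ w. S t w i j * indicator A w \<partial>Q i) = (ennreal (1 / c i) * ennreal (c j)) * emeasure (Q j) (A \<inter> ?B)"
    by (simp add: mult.assoc)
  also have "ennreal (1 / c i) * ennreal (c j) = S 0 w0 i j"
  proof -
    have "ennreal (1 / c i) * ennreal (c j) = ennreal (1 / c i) * (S 0 w0 i j * ennreal (c i))"
      using key0[OF w0 i j] by simp
    also have "\<dots> = S 0 w0 i j * (ennreal (c i) * ennreal (1 / c i))" by (simp only: ac_simps)
    also have "\<dots> = S 0 w0 i j" using cinv[OF i w0] by simp
    finally show ?thesis .
  qed
  finally show "(\<integral>\<^sup>+ w. S t w i j * indicator A w \<partial>Q i) = S 0 w0 i j * emeasure (Q j) (A \<inter> ?B)" .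
qed

lemma mdiv: assumes "b \<noteq> 0" "b \<noteq> \<top>" shows "b * (a / b) = (a::ennreal)"
proof -
  have "b * (a / b) = (a * b) / b" by (simp add: divide_ennreal_def ac_simps)
  then show ?thesis using ennreal_mult_divide_eq[OF assms] by simp
qed

definition Cib :: "nat \<Rightarrow> 'a set \<Rightarrow> 'a \<Rightarrow> nat \<Rightarrow> ennreal" where
  "Cib i B = (\<lambda>x j. S T x j i * indicator B x)"

lemma Cib_claims: assumes i: "i \<in> {1..d}" and B: "B \<in> sets (F T)"
  shows "Cib i B \<in> claims d T F S"
  unfolding claims_def Cib_def
proof (intro CollectI conjI ballI)
  fix j assume j: "j \<in> {1..d}"
  show "(\<lambda>w. S T w j i * indicator B w) \<in> borel_measurable (F T)"
    using Smeas[OF zeroT(2) j i] B by (intro borel_measurable_times_ennreal) auto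
next
  fix w assume w: "w \<in> \<Omega>"
  interpret xm d "S T w" using Sem zeroT w by auto
  show "value_vector d (S T w) (\<lambda>j. S T w j i * indicator B w)"
    unfolding value_vector_def
  proof (intro ballI impI)
    fix j k assume j: "j \<in> {1..d}" and k: "k \<in> {1..d}" and pd: "prod_defined (S T w j k) (S T w k i * indicator B w)"
    show "S T w j k * (S T w k i * indicator B w) = S T w j i * indicator B w"
    proof (cases "w \<in> B")
      case True
      then have "prod_defined (S T w j k) (S T w k i)" using pd by simp
      then have "S T w j k * S T w k i = S T w j i" using mul[OF j k i] by simp
      then show ?thesis using True by (simp add: mult.assoc[symmetric])
    qed simp
  qed
qed

lemma Cib_bar: assumes x: "x \<in> \<Omega>" and i: "i \<in> {1..d}"
  shows "claim_bar d T S (Cib i B) x = ennreal (basket d S i T x) * indicator B x"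
proof -
  interpret xm d "S T x" using Sem zeroT x by auto
  have ae: "active d S T x = actm d (S T x)" by (rule active_eq)
  have ne: "actm d (S T x) \<noteq> {}" using act_ne d by auto
  have fin: "finite (actm d (S T x))" using act_sub finite_subset by blast
  have n0: "(of_nat (card (actm d (S T x))) :: ennreal) \<noteq> 0" using ne fin by simp
  have trm: "ennreal (basket d S j T x) * (S T x j i * indicator B x) = ib i * indicator B x"
    if j: "j \<in> actm d (S T x)" for j
  proof -
    have jd: "j \<in> {1..d}" using j act_sub by auto
    have "ennreal (basket d S j T x) * (S T x j i * indicator B x) = (S T x j i * ib j) * indicator B x"
      unfolding sb_eq[OF zeroT(2) x jd] by (simp add: ac_simps)
    also have "\<dots> = ib i * (if S T x i j \<noteq> 0 then 1 else 0) * indicator B x" using key[OF jd i] by simp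
    also have "\<dots> = ib i * indicator B x"
    proof (cases "i \<in> actm d (S T x)")
      case True then show ?thesis using act_nz[OF True j] by simp
    next
      case False then show ?thesis using ib_inact[OF False i] by simp
    qed
    finally show ?thesis .
  qed
  have "claim_bar d T S (Cib i B) x = (\<Sum>j\<in>actm d (S T x). ib i * indicator B x) / of_nat (card (actm d (S T x)))"
    unfolding claim_bar_def Cib_def ae using trm by (simp cong: sum.cong)
  also have "\<dots> = (ib i * indicator B x * of_nat (card (actm d (S T x)))) / of_nat (card (actm d (S T x)))"
    by (simp add: mult.commute)
  also have "\<dots> = ib i * indicator B x" using n0 by (intro ennreal_mult_divide_eq) (auto simp: ennreal_of_nat_neq_top)
  finally show ?thesis unfolding sb_eq[OF zeroT(2) x i] .
qed

lemma Cib_L1b: assumes Pb: "prob_on T F Qb" and i: "i \<in> {1..d}" and B: "B \<in> sets (F T)"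
  shows "L1_nn Qb (claim_bar d T S (Cib i B))"
  unfolding L1_nn_def
proof
  show "claim_bar d T S (Cib i B) \<in> borel_measurable Qb" using Cbar_meas[OF Pb Cib_claims[OF i B]] .
  interpret PS: prob_space Qb using Pb unfolding prob_on_def by auto
  have "(\<integral>\<^sup>+ w. claim_bar d T S (Cib i B) w \<partial>Qb) \<le> (\<integral>\<^sup>+ w. 1 \<partial>Qb)"
  proof (rule nn_integral_mono)
    fix w assume "w \<in> space Qb"
    then have w: "w \<in> \<Omega>" using prob_on_sp[OF Pb] by simp
    have "ennreal (basket d S i T w) * indicator B w \<le> 1 * 1"
      using sb_le1[OF zeroT(2) w i] by (intro mult_mono) (auto simp: indicator_def)
    then show "claim_bar d T S (Cib i B) w \<le> 1" using Cib_bar[OF w i] by simp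
  qed
  also have "\<dots> = 1" using PS.emeasure_space_1 by simp
  finally show "(\<integral>\<^sup>+ w. claim_bar d T S (Cib i B) w \<partial>Qb) < \<infinity>" by (simp add: le_less_trans)
qed

lemma Cib_L1q: assumes NC: "numeraire_consistent d T F S Q" and i: "i \<in> {1..d}" and B: "B \<in> sets (F T)"
  and k: "k \<in> {1..d}"
  shows "L1_nn (Q k) (\<lambda>w. Cib i B w k)"
  unfolding L1_nn_def
proof
  have Pk: "prob_on T F (Q k)" using NC_parts(1)[OF NC k] .
  have Pi: "prob_on T F (Q i)" using NC_parts(1)[OF NC i] .
  interpret PI: prob_space "Q i" using Pi unfolding prob_on_def by auto
  obtain w0 where w0: "w0 \<in> \<Omega>" using prob_on_ne[OF Pk] by auto
  show "(\<lambda>w. Cib i B w k) \<in> borel_measurable (Q k)"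
    using claim_meas(1)[OF Pk Cib_claims[OF i B] k] .
  have "(\<integral>\<^sup>+ w. Cib i B w k \<partial>Q k) = S 0 w0 k i * emeasure (Q i) (B \<inter> {w\<in>\<Omega>. S T w i k > 0})"
    unfolding Cib_def using NC_parts(2)[OF NC k i zeroT(2) B w0] by simp
  also have "\<dots> < \<top>" using S0_fin[OF w0 k i]
    by (simp add: ennreal_mult_eq_top_iff PI.emeasure_finite less_top[symmetric])
  finally show "(\<integral>\<^sup>+ w. Cib i B w k \<partial>Q k) < \<infinity>" by simp
qed

lemma AE_ex: assumes P: "prob_on T F M" and A: "AE w in M. Pr w" shows "\<exists>w\<in>\<Omega>. Pr w"
proof (rule ccontr)
  interpret prob_space M using P unfolding prob_on_def by auto
  assume "\<not> (\<exists>w\<in>\<Omega>. Pr w)"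
  note nx = this
  have "AE w in M. False" using A AE_space
  proof eventually_elim
    case (elim w) then show False using nx prob_on_sp[OF P] by auto
  qed
  then show False by simp
qed

lemma U: assumes Pb: "prob_on T F Qb" and NC: "numeraire_consistent d T F S Q"
  and ST: "\<And>i B. i \<in> {1..d} \<Longrightarrow> B \<in> sets (F T) \<Longrightarrow> star_identity d T F S Q Qb 0 (Cib i B)"
  shows "DENS Q Qb"
  unfolding DENS_def
proof (intro ballI)
  fix i A assume i: "i \<in> {1..d}" and A: "A \<in> sets (F T)"
  let ?C = "Cib i A"
  define n where "n x = (of_nat (card (active d S T x)) :: ennreal)" for x
  define f where "f x = indicator A x / n x" for x
  have Cm: "?C \<in> claims d T F S" using Cib_claims[OF i A] .
  have Pi: "prob_on T F (Q i)" using NC_parts(1)[OF NC i] .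
  have nm: "n \<in> borel_measurable (F T)" unfolding n_def using card_act_meas[OF zeroT(2)] .
  have fm: "f \<in> borel_measurable (F T)" unfolding f_def using A nm by (intro divm) auto
  have "AE w in Qb. nn_cond_exp Qb (F 0) (claim_bar d T S ?C) w =
     (\<Sum>j\<in>active d S 0 w. ennreal (basket d S j 0 w) * nn_cond_exp (Q j) (F 0) (\<lambda>x. ?C x j / of_nat (card (active d S T x))) w)"
    using ST[OF i A] unfolding star_identity_def .
  then obtain w where w: "w \<in> \<Omega>" and E0: "nn_cond_exp Qb (F 0) (claim_bar d T S ?C) w =
     (\<Sum>j\<in>active d S 0 w. ennreal (basket d S j 0 w) * nn_cond_exp (Q j) (F 0) (\<lambda>x. ?C x j / of_nat (card (active d S T x))) w)"
    using AE_ex[OF Pb] by blast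
  have E: "(\<integral>\<^sup>+ x. claim_bar d T S ?C x \<partial>Qb) =
     (\<Sum>j\<in>{1..d}. ennreal (c j) * (\<integral>\<^sup>+ x. ?C x j / n x \<partial>Q j))"
  proof -
    have "(\<integral>\<^sup>+ x. claim_bar d T S ?C x \<partial>Qb) = nn_cond_exp Qb (F 0) (claim_bar d T S ?C) w"
      using nc0[OF Pb Cbar_meas[OF Pb Cm] w] by simp
    also have "\<dots> = (\<Sum>j\<in>{1..d}. ennreal (basket d S j 0 w) * nn_cond_exp (Q j) (F 0) (\<lambda>x. ?C x j / n x) w)"
      unfolding E0 n_def using act0 w by simp
    also have "\<dots> = (\<Sum>j\<in>{1..d}. ennreal (c j) * (\<integral>\<^sup>+ x. ?C x j / n x \<partial>Q j))"
    proof (rule sum.cong)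
      fix j assume j: "j \<in> {1..d}"
      have Pj: "prob_on T F (Q j)" using NC_parts(1)[OF NC j] .
      show "ennreal (basket d S j 0 w) * nn_cond_exp (Q j) (F 0) (\<lambda>x. ?C x j / n x) w = ennreal (c j) * (\<integral>\<^sup>+ x. ?C x j / n x \<partial>Q j)"
        using c_eq[OF w j] nc0[OF Pj _ w] claim_meas(2)[OF Pj Cm j] unfolding n_def by simp
    qed simp
    finally show ?thesis .
  qed
  have L: "(\<integral>\<^sup>+ x. claim_bar d T S ?C x \<partial>Qb) = (\<integral>\<^sup>+ w. ennreal (basket d S i T w) * indicator A w \<partial>Qb)"
    using Cib_bar[OF _ i] prob_on_sp[OF Pb] by (intro nn_integral_cong) simp
  have gm: "\<And>j. j \<in> {1..d} \<Longrightarrow> (\<lambda>x. indicator {x\<in>\<Omega>. S T x i j > 0} x * f x) \<in> borel_measurable (Q i)"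
  proof -
    fix j assume j: "j \<in> {1..d}"
    have "indicator {x\<in>\<Omega>. S T x i j > 0} \<in> borel_measurable (F T)"
      using Bset[OF zeroT(2) j i] by (rule borel_measurable_indicator)
    then have "indicator {x\<in>\<Omega>. S T x i j > 0} \<in> borel_measurable (Q i)" by (rule mFt[OF Pi zeroT(2)])
    moreover have "f \<in> borel_measurable (Q i)" using fm by (rule mFt[OF Pi zeroT(2)])
    ultimately show "(\<lambda>x. indicator {x\<in>\<Omega>. S T x i j > 0} x * f x) \<in> borel_measurable (Q i)"
      by (rule borel_measurable_times_ennreal)
  qed
  have R: "ennreal (c j) * (\<integral>\<^sup>+ x. ?C x j / n x \<partial>Q j) = ennreal (c i) * (\<integral>\<^sup>+ x. indicator {x\<in>\<Omega>. S T x i j > 0} x * f x \<partial>Q i)"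
    if j: "j \<in> {1..d}" for j
  proof -
    have "(\<integral>\<^sup>+ x. ?C x j / n x \<partial>Q j) = (\<integral>\<^sup>+ x. S T x j i * f x \<partial>Q j)"
      unfolding Cib_def f_def by (intro nn_integral_cong) (simp add: divide_ennreal_def mult.assoc)
    also have "\<dots> = S 0 w j i * (\<integral>\<^sup>+ x. indicator {x\<in>\<Omega>. S T x i j > 0} x * f x \<partial>Q i)"
      using NCfun[OF NC j i zeroT(2) w fm] .
    finally have "ennreal (c j) * (\<integral>\<^sup>+ x. ?C x j / n x \<partial>Q j) = (S 0 w j i * ennreal (c j)) * (\<integral>\<^sup>+ x. indicator {x\<in>\<Omega>. S T x i j > 0} x * f x \<partial>Q i)"
      by (simp add: ac_simps)
    then show ?thesis using key0[OF w j i] by simp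
  qed
  have "(\<Sum>j\<in>{1..d}. ennreal (c j) * (\<integral>\<^sup>+ x. ?C x j / n x \<partial>Q j))
      = ennreal (c i) * (\<Sum>j\<in>{1..d}. (\<integral>\<^sup>+ x. indicator {x\<in>\<Omega>. S T x i j > 0} x * f x \<partial>Q i))"
    using R by (simp add: sum_distrib_left)
  also have "\<dots> = ennreal (c i) * (\<integral>\<^sup>+ x. (\<Sum>j\<in>{1..d}. indicator {x\<in>\<Omega>. S T x i j > 0} x * f x) \<partial>Q i)"
    using gm by (subst nn_integral_sum) auto
  also have "(\<integral>\<^sup>+ x. (\<Sum>j\<in>{1..d}. indicator {x\<in>\<Omega>. S T x i j > 0} x * f x) \<partial>Q i) = (\<integral>\<^sup>+ x. indicator A x \<partial>Q i)"
  proof (rule nn_integral_cong_AE)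
    show "AE x in Q i. (\<Sum>j\<in>{1..d}. indicator {x\<in>\<Omega>. S T x i j > 0} x * f x) = indicator A x"
      using null_inact[OF NC i zeroT(2)] AE_space
    proof eventually_elim
      case (elim x)
      then have x: "x \<in> \<Omega>" using prob_on_sp[OF Pi] by simp
      interpret xm d "S T x" using Sem zeroT x by auto
      have ne: "actm d (S T x) \<noteq> {}" using act_ne d by auto
      have fin: "finite (actm d (S T x))" using act_sub finite_subset by blast
      have n0: "n x \<noteq> 0" "n x \<noteq> \<top>" unfolding n_def active_eq using ne fin by auto
      have "(\<Sum>j\<in>{1..d}. indicator {x\<in>\<Omega>. S T x i j > 0} x * f x) = (\<Sum>j\<in>{1..d}. (if S T x i j \<noteq> 0 then 1 else 0) * f x)"
        using x by (intro sum.cong) (auto simp: zero_less_iff_neq_zero)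
      also have "\<dots> = (\<Sum>j\<in>{1..d}. (if S T x i j \<noteq> 0 then 1 else 0)) * f x"
        by (rule sum_distrib_right[symmetric])
      also have "(\<Sum>j\<in>{1..d}. (if S T x i j \<noteq> 0 then 1 else 0)) = (of_nat (card {j\<in>{1..d}. S T x i j \<noteq> 0}) :: ennreal)"
      proof -
        have "(of_nat (card {j\<in>{1..d}. S T x i j \<noteq> 0}) :: ennreal) = of_nat (\<Sum>j\<in>{1..d}. if S T x i j \<noteq> 0 then 1 else 0)"
          by (subst card_filter) auto
        also have "\<dots> = (\<Sum>j\<in>{1..d}. (if S T x i j \<noteq> 0 then 1 else 0))"
          unfolding of_nat_sum by (intro sum.cong) auto
        finally show ?thesis by simp
      qed
      also have "\<dots> = n x" unfolding n_def active_eq pos_set[OF elim(1)] ..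
      finally show ?case unfolding f_def using mdiv[OF n0] by simp
    qed
  qed
  also have "\<dots> = emeasure (Q i) A" using A prob_on_sets[OF Pi] by simp
  finally show "ennreal (c i) * emeasure (Q i) A = (\<integral>\<^sup>+ w. ennreal (basket d S i T w) * indicator A w \<partial>Qb)"
    using E L by simp
qed

end

context mk
begin

definition Qs :: "(nat \<Rightarrow> 'a measure) \<Rightarrow> 'a measure" where
  "Qs Q = measure_of \<Omega> (sets (F T)) (\<lambda>A. \<Sum>k\<in>{1..d}. ennreal (c k) * emeasure (Q k) A)"

lemma Qs_props: assumes NC: "numeraire_consistent d T F S Q"
  shows "sets (Qs Q) = sets (F T)" "space (Qs Q) = \<Omega>"
    "\<And>A. A \<in> sets (F T) \<Longrightarrow> emeasure (Qs Q) A = (\<Sum>k\<in>{1..d}. ennreal (c k) * emeasure (Q k) A)"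
proof -
  have sc: "sets (F T) \<subseteq> Pow \<Omega>" by (rule sets.space_closed)
  show "sets (Qs Q) = sets (F T)" unfolding Qs_def using sets_measure_of[OF sc] sets.sigma_sets_eq by simp
  show "space (Qs Q) = \<Omega>" unfolding Qs_def using space_measure_of[OF sc] by simp
  have sQ: "\<And>k. k \<in> {1..d} \<Longrightarrow> sets (Q k) = sets (F T)" using NC_parts(1)[OF NC] prob_on_sets by blast
  fix A assume A: "A \<in> sets (F T)"
  show "emeasure (Qs Q) A = (\<Sum>k\<in>{1..d}. ennreal (c k) * emeasure (Q k) A)"
    unfolding Qs_def
  proof (rule emeasure_measure_of_sigma[OF sets.sigma_algebra_axioms _ _ A])
    show "positive (sets (F T)) (\<lambda>A. \<Sum>k\<in>{1..d}. ennreal (c k) * emeasure (Q k) A)"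
      unfolding positive_def by simp
    show "countably_additive (sets (F T)) (\<lambda>A. \<Sum>k\<in>{1..d}. ennreal (c k) * emeasure (Q k) A)"
      unfolding countably_additive_def
    proof (intro allI impI)
      fix B :: "nat \<Rightarrow> 'a set" assume B1: "range B \<subseteq> sets (F T)" and B2: "disjoint_family B" and B3: "\<Union> (range B) \<in> sets (F T)"
      have "(\<Sum>n. \<Sum>k\<in>{1..d}. ennreal (c k) * emeasure (Q k) (B n)) = (\<Sum>k\<in>{1..d}. \<Sum>n. ennreal (c k) * emeasure (Q k) (B n))"
        by (rule suminf_sum) (rule summableI)
      also have "\<dots> = (\<Sum>k\<in>{1..d}. ennreal (c k) * emeasure (Q k) (\<Union> (range B)))"
      proof (rule sum.cong)
        fix k assume k: "k \<in> {1..d}"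
        have "(\<Sum>n. emeasure (Q k) (B n)) = emeasure (Q k) (\<Union> (range B))"
          using B1 B2 sQ[OF k] by (intro suminf_emeasure) auto
        then show "(\<Sum>n. ennreal (c k) * emeasure (Q k) (B n)) = ennreal (c k) * emeasure (Q k) (\<Union> (range B))"
          by (simp add: ennreal_suminf_cmult)
      qed simp
      finally show "(\<Sum>n. \<Sum>k\<in>{1..d}. ennreal (c k) * emeasure (Q k) (B n)) = (\<Sum>k\<in>{1..d}. ennreal (c k) * emeasure (Q k) (\<Union> (range B)))" .
    qed
  qed
qed

lemma Qs_int: assumes NC: "numeraire_consistent d T F S Q" and f: "f \<in> borel_measurable (Qs Q)"
  shows "(\<integral>\<^sup>+ x. f x \<partial>Qs Q) = (\<Sum>k\<in>{1..d}. ennreal (c k) * (\<integral>\<^sup>+ x. f x \<partial>Q k))"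
proof (rule nn_integral_summeas[OF Qs_props(1,2)[OF NC] _ Qs_props(3)[OF NC] f])
  fix k assume k: "k \<in> {1..d}"
  have P: "prob_on T F (Q k)" using NC_parts(1)[OF NC k] .
  show "sets (Q k) = sets (F T) \<and> space (Q k) = \<Omega>" using prob_on_sets[OF P] prob_on_sp[OF P] by simp
qed

lemma Qs_prob: assumes NC: "numeraire_consistent d T F S Q" shows "prob_on T F (Qs Q)"
proof -
  obtain w0 where w0: "w0 \<in> \<Omega>" using prob_on_ne[OF NC_parts(1)[OF NC, of 1]] d by auto
  have "emeasure (Qs Q) \<Omega> = (\<Sum>k\<in>{1..d}. ennreal (c k) * emeasure (Q k) \<Omega>)"
    using Qs_props(3)[OF NC] by simp
  also have "\<dots> = (\<Sum>k\<in>{1..d}. ennreal (basket d S k 0 w0))"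
  proof (rule sum.cong)
    fix k assume k: "k \<in> {1..d}"
    have P: "prob_on T F (Q k)" using NC_parts(1)[OF NC k] .
    interpret prob_space "Q k" using P unfolding prob_on_def by auto
    show "ennreal (c k) * emeasure (Q k) \<Omega> = ennreal (basket d S k 0 w0)"
      using emeasure_space_1 prob_on_sp[OF P] c_eq[OF w0 k] by simp
  qed simp
  also have "\<dots> = 1" using sum_sb1[OF zeroT(1) w0] .
  finally have "emeasure (Qs Q) (space (Qs Q)) = 1" using Qs_props(2)[OF NC] by simp
  then have "prob_space (Qs Q)" by (rule prob_spaceI)
  then show ?thesis unfolding prob_on_def using Qs_props(1,2)[OF NC] by simp
qed

lemma Qs_key: assumes NC: "numeraire_consistent d T F S Q" and t: "t \<in> {0..T}" and i: "i \<in> {1..d}"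
  and A: "A \<in> sets (F t)"
  shows "(\<integral>\<^sup>+ w. ennreal (basket d S i t w) * indicator A w \<partial>Qs Q) = ennreal (c i) * emeasure (Q i) A"
proof -
  have P: "prob_on T F (Qs Q)" using Qs_prob[OF NC] .
  have Pi: "prob_on T F (Q i)" using NC_parts(1)[OF NC i] .
  have AT: "A \<in> sets (F T)" using A setsFT[OF t] by auto
  have ind: "indicator A \<in> borel_measurable (F t)" using A by simp
  have fm: "(\<lambda>w. ennreal (basket d S i t w) * indicator A w) \<in> borel_measurable (Qs Q)"
    using mind[OF sbm[OF P t i]] AT Qs_props(1)[OF NC] by simp
  have "(\<integral>\<^sup>+ w. ennreal (basket d S i t w) * indicator A w \<partial>Qs Q)
      = (\<Sum>k\<in>{1..d}. ennreal (c k) * (\<integral>\<^sup>+ w. indicator A w * ennreal (basket d S i t w) \<partial>Q k))"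
    unfolding Qs_int[OF NC fm] by (simp add: mult.commute)
  also have "\<dots> = (\<Sum>k\<in>{1..d}. ennreal (c i) * (\<integral>\<^sup>+ w. indicator A w * ennreal (basket d S k t w) \<partial>Q i))"
    using SYM[OF NC _ i t ind] by (intro sum.cong) auto
  also have "\<dots> = ennreal (c i) * (\<integral>\<^sup>+ w. (\<Sum>k\<in>{1..d}. indicator A w * ennreal (basket d S k t w)) \<partial>Q i)"
  proof -
    have "(\<integral>\<^sup>+ w. (\<Sum>k\<in>{1..d}. indicator A w * ennreal (basket d S k t w)) \<partial>Q i)
        = (\<Sum>k\<in>{1..d}. (\<integral>\<^sup>+ w. indicator A w * ennreal (basket d S k t w) \<partial>Q i))"
    proof (rule nn_integral_sum)
      fix k assume k: "k \<in> {1..d}"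
      show "(\<lambda>w. indicator A w * ennreal (basket d S k t w)) \<in> borel_measurable (Q i)"
        using mind[OF sbm[OF Pi t k], of A] AT prob_on_sets[OF Pi] by (simp add: mult.commute)
    qed
    then show ?thesis by (simp add: sum_distrib_left)
  qed
  also have "(\<integral>\<^sup>+ w. (\<Sum>k\<in>{1..d}. indicator A w * ennreal (basket d S k t w)) \<partial>Q i) = (\<integral>\<^sup>+ w. indicator A w \<partial>Q i)"
  proof (rule nn_integral_cong)
    fix w assume "w \<in> space (Q i)"
    then have w: "w \<in> \<Omega>" using prob_on_sp[OF Pi] by simp
    show "(\<Sum>k\<in>{1..d}. indicator A w * ennreal (basket d S k t w)) = indicator A w"
      using sum_sb1[OF t w] by (simp add: sum_distrib_left[symmetric])
  qed
  also have "\<dots> = emeasure (Q i) A" using AT prob_on_sets[OF Pi] by simp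
  finally show ?thesis .
qed

lemma Qs_val: assumes NC: "numeraire_consistent d T F S Q" shows "valuation_measure d T F S (Qs Q)"
proof (rule val_of_nc[OF Qs_prob[OF NC]])
  fix i s t assume i: "i \<in> {1..d}" and st: "0 \<le> s" "s \<le> t" "t \<le> T"
  have s: "s \<in> {0..T}" and t: "t \<in> {0..T}" using st by auto
  have P: "prob_on T F (Qs Q)" using Qs_prob[OF NC] .
  interpret sigma_finite_subalgebra "Qs Q" "F s" using sfs[OF P s] .
  have "AE w in Qs Q. ennreal (basket d S i s w) = nn_cond_exp (Qs Q) (F s) (\<lambda>w. ennreal (basket d S i t w)) w"
  proof (rule nn_cond_exp_charact)
    fix A assume A: "A \<in> sets (F s)"
    have At: "A \<in> sets (F t)" using A setsF[OF st] by auto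
    show "(\<integral>\<^sup>+ w\<in>A. ennreal (basket d S i t w) \<partial>Qs Q) = (\<integral>\<^sup>+ w\<in>A. ennreal (basket d S i s w) \<partial>Qs Q)"
      using Qs_key[OF NC t i At] Qs_key[OF NC s i A] by simp
  next
    show "(\<lambda>w. ennreal (basket d S i t w)) \<in> borel_measurable (Qs Q)" using sbm[OF P t i] .
    show "(\<lambda>w. ennreal (basket d S i s w)) \<in> borel_measurable (F s)"
      using basket_meas[OF s i] by (rule measurable_compose[OF _ measurable_ennreal])
  qed
  then show "AE w in Qs Q. nn_cond_exp (Qs Q) (F s) (\<lambda>w. ennreal (basket d S i t w)) w = ennreal (basket d S i s w)"
    by (auto elim: eventually_mono)
qed

lemma Qs_dens: assumes NC: "numeraire_consistent d T F S Q" shows "DENS Q (Qs Q)"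
  unfolding DENS_def using Qs_key[OF NC zeroT(2)] by simp

lemma Cbar_act: assumes x: "x \<in> \<Omega>" and C: "C \<in> claims d T F S" and i: "i \<in> actm d (S T x)"
  shows "claim_bar d T S C x = ennreal (basket d S i T x) * C x i"
proof -
  interpret xm d "S T x" using Sem zeroT x by auto
  have vvx: "value_vector d (S T x) (C x)" using C x unfolding claims_def by auto
  have id: "i \<in> {1..d}" using i act_sub by auto
  have fin: "finite (actm d (S T x))" using act_sub finite_subset by blast
  have n0: "(of_nat (card (actm d (S T x))) :: ennreal) \<noteq> 0" using i fin by auto
  have "(\<Sum>j\<in>actm d (S T x). ennreal (basket d S j T x) * C x j) = (\<Sum>j\<in>actm d (S T x). ib i * C x i)"
  proof (rule sum.cong)
    fix j assume j: "j \<in> actm d (S T x)"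
    then have jd: "j \<in> {1..d}" using act_sub by auto
    show "ennreal (basket d S j T x) * C x j = ib i * C x i"
      unfolding sb_eq[OF zeroT(2) x jd] using vv[OF vvx i j] by simp
  qed simp
  then have "claim_bar d T S C x = (ib i * C x i * of_nat (card (actm d (S T x)))) / of_nat (card (actm d (S T x)))"
    unfolding claim_bar_def active_eq by (simp add: mult.commute)
  also have "\<dots> = ib i * C x i" using n0 by (intro ennreal_mult_divide_eq) auto
  finally show ?thesis unfolding sb_eq[OF zeroT(2) x id] .
qed

lemma ST_Cib_b: assumes Pb: "prob_on T F Qb"
  and H: "\<forall>r\<in>{0..T}. \<forall>C\<in>claims d T F S. L1_nn Qb (claim_bar d T S C) \<longrightarrow> star_identity d T F S Q Qb r C"
  shows "\<And>i B. i \<in> {1..d} \<Longrightarrow> B \<in> sets (F T) \<Longrightarrow> star_identity d T F S Q Qb 0 (Cib i B)"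
  using H Cib_claims Cib_L1b[OF Pb] zeroT by blast

lemma mainA: "\<forall>Qb. valuation_measure d T F S Qb \<longrightarrow>
        (\<exists>Q. numeraire_consistent d T F S Q \<and> equiv_sum d T F Q Qb \<and>
             (\<forall>r\<in>{0..T}. \<forall>C\<in>claims d T F S. L1_nn Qb (claim_bar d T S C) \<longrightarrow>
                 star_identity d T F S Q Qb r C) \<and>
             (\<forall>Q'. numeraire_consistent d T F S Q' \<and> equiv_sum d T F Q' Qb \<and>
                 (\<forall>r\<in>{0..T}. \<forall>C\<in>claims d T F S. L1_nn Qb (claim_bar d T S C) \<longrightarrow>
                     star_identity d T F S Q' Qb r C)
               \<longrightarrow> (\<forall>i\<in>{1..d}. Q' i = Q i)))"
proof (intro allI impI)
  fix Qb assume V: "valuation_measure d T F S Qb"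
  have Pb: "prob_on T F Qb" using V unfolding valuation_measure_def by auto
  define Qa where "Qa i = density Qb (Zf i)" for i
  have Qd: "\<And>i. i \<in> {1..d} \<Longrightarrow> prob_on T F (Qa i) \<and> Qa i = density Qb (Zf i)"
    unfolding Qa_def using qa_prob[OF V] by simp
  have NCa: "numeraire_consistent d T F S Qa" by (rule NC_of[OF V Qd])
  have Da: "DENS Qa Qb" unfolding DENS_def Qa_def using dens_of[OF Pb] by simp
  have Ea: "equiv_sum d T F Qa Qb" by (rule dens_equiv[OF Pb Da])
  have Sa: "\<forall>r\<in>{0..T}. \<forall>C\<in>claims d T F S. L1_nn Qb (claim_bar d T S C) \<longrightarrow> star_identity d T F S Qa Qb r C"
    using STAR[OF V Qd] by blast
  have Ua: "\<forall>Q'. numeraire_consistent d T F S Q' \<and> equiv_sum d T F Q' Qb \<and>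
                 (\<forall>r\<in>{0..T}. \<forall>C\<in>claims d T F S. L1_nn Qb (claim_bar d T S C) \<longrightarrow>
                     star_identity d T F S Q' Qb r C)
               \<longrightarrow> (\<forall>i\<in>{1..d}. Q' i = Qa i)"
  proof (intro allI impI ballI)
    fix Q' i assume H: "numeraire_consistent d T F S Q' \<and> equiv_sum d T F Q' Qb \<and>
                 (\<forall>r\<in>{0..T}. \<forall>C\<in>claims d T F S. L1_nn Qb (claim_bar d T S C) \<longrightarrow>
                     star_identity d T F S Q' Qb r C)" and i: "i \<in> {1..d}"
    have NC': "numeraire_consistent d T F S Q'" using H by blast
    have D': "DENS Q' Qb" using U[OF Pb NC' ST_Cib_b[OF Pb]] H by blast
    show "Q' i = Qa i" using dens_density[OF Pb NC_parts(1)[OF NC' i] D' i] unfolding Qa_def by simp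
  qed
  show "\<exists>Q. numeraire_consistent d T F S Q \<and> equiv_sum d T F Q Qb \<and>
             (\<forall>r\<in>{0..T}. \<forall>C\<in>claims d T F S. L1_nn Qb (claim_bar d T S C) \<longrightarrow>
                 star_identity d T F S Q Qb r C) \<and>
             (\<forall>Q'. numeraire_consistent d T F S Q' \<and> equiv_sum d T F Q' Qb \<and>
                 (\<forall>r\<in>{0..T}. \<forall>C\<in>claims d T F S. L1_nn Qb (claim_bar d T S C) \<longrightarrow>
                     star_identity d T F S Q' Qb r C)
               \<longrightarrow> (\<forall>i\<in>{1..d}. Q' i = Q i))"
    using NCa Ea Sa Ua by blast
qed

lemma mainB: "\<forall>Q. numeraire_consistent d T F S Q \<longrightarrow>
        (\<exists>!Qb. valuation_measure d T F S Qb \<and> equiv_sum d T F Q Qb \<and>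
             (\<forall>r\<in>{0..T}. \<forall>C\<in>claims d T F S. (\<forall>i\<in>{1..d}. L1_nn (Q i) (\<lambda>w. C w i)) \<longrightarrow>
                 star_identity d T F S Q Qb r C))"
proof (intro allI impI)
  fix Q assume NC: "numeraire_consistent d T F S Q"
  have Vs: "valuation_measure d T F S (Qs Q)" by (rule Qs_val[OF NC])
  have Ps: "prob_on T F (Qs Q)" by (rule Qs_prob[OF NC])
  have Ds: "DENS Q (Qs Q)" by (rule Qs_dens[OF NC])
  have Es: "equiv_sum d T F Q (Qs Q)" by (rule dens_equiv[OF Ps Ds])
  have Qd: "\<And>i. i \<in> {1..d} \<Longrightarrow> prob_on T F (Q i) \<and> Q i = density (Qs Q) (Zf i)"
    using dens_density[OF Ps NC_parts(1)[OF NC] Ds] NC_parts(1)[OF NC] by blast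
  have Ss: "\<forall>r\<in>{0..T}. \<forall>C\<in>claims d T F S. (\<forall>i\<in>{1..d}. L1_nn (Q i) (\<lambda>w. C w i)) \<longrightarrow> star_identity d T F S Q (Qs Q) r C"
    using STAR[OF Vs Qd] by blast
  show "\<exists>!Qb. valuation_measure d T F S Qb \<and> equiv_sum d T F Q Qb \<and>
             (\<forall>r\<in>{0..T}. \<forall>C\<in>claims d T F S. (\<forall>i\<in>{1..d}. L1_nn (Q i) (\<lambda>w. C w i)) \<longrightarrow>
                 star_identity d T F S Q Qb r C)"
  proof (rule ex1I[of _ "Qs Q"])
    show "valuation_measure d T F S (Qs Q) \<and> equiv_sum d T F Q (Qs Q) \<and>
             (\<forall>r\<in>{0..T}. \<forall>C\<in>claims d T F S. (\<forall>i\<in>{1..d}. L1_nn (Q i) (\<lambda>w. C w i)) \<longrightarrow>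
                 star_identity d T F S Q (Qs Q) r C)" using Vs Es Ss by blast
  next
    fix Qb assume H: "valuation_measure d T F S Qb \<and> equiv_sum d T F Q Qb \<and>
             (\<forall>r\<in>{0..T}. \<forall>C\<in>claims d T F S. (\<forall>i\<in>{1..d}. L1_nn (Q i) (\<lambda>w. C w i)) \<longrightarrow>
                 star_identity d T F S Q Qb r C)"
    have Pb: "prob_on T F Qb" using H unfolding valuation_measure_def by blast
    have ST: "\<And>i B. i \<in> {1..d} \<Longrightarrow> B \<in> sets (F T) \<Longrightarrow> star_identity d T F S Q Qb 0 (Cib i B)"
    proof -
      fix i B assume i: "i \<in> {1..d}" and B: "B \<in> sets (F T)"
      have "\<forall>k\<in>{1..d}. L1_nn (Q k) (\<lambda>w. Cib i B w k)" using Cib_L1q[OF NC i B] by blast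
      then show "star_identity d T F S Q Qb 0 (Cib i B)" using H Cib_claims[OF i B] zeroT by blast
    qed
    have D: "DENS Q Qb" by (rule U[OF Pb NC ST])
    show "Qb = Qs Q"
    proof (rule measure_eqI)
      show "sets Qb = sets (Qs Q)" using prob_on_sets[OF Pb] Qs_props(1)[OF NC] by simp
      fix A assume "A \<in> sets Qb"
      then have A: "A \<in> sets (F T)" using prob_on_sets[OF Pb] by simp
      show "emeasure Qb A = emeasure (Qs Q) A" using dens_sum[OF Pb D A] Qs_props(3)[OF NC A] by simp
    qed
  qed
qed

lemma mainC: "\<forall>Qb Q r C i. valuation_measure d T F S Qb \<and>
        numeraire_consistent d T F S Q \<and> equiv_sum d T F Q Qb \<and>
        (\<forall>r\<in>{0..T}. \<forall>C\<in>claims d T F S. L1_nn Qb (claim_bar d T S C) \<longrightarrow>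
            star_identity d T F S Q Qb r C) \<and>
        r \<in> {0..T} \<and> C \<in> claims d T F S \<and> i \<in> {1..d} \<and>
        (AE w in Qb. claim_bar d T S C w =
            claim_bar d T S C w * indicator {x. i \<in> active d S T x} w) \<and>
        L1_nn Qb (claim_bar d T S C)
      \<longrightarrow> (AE w in Qb. nn_cond_exp Qb (F r) (claim_bar d T S C) w =
            ennreal (basket d S i r w) * nn_cond_exp (Q i) (F r) (\<lambda>x. C x i) w)"
proof (intro allI impI, elim conjE)
  fix Qb Q r C i
  assume V: "valuation_measure d T F S Qb" and NC: "numeraire_consistent d T F S Q"
    and H: "\<forall>r\<in>{0..T}. \<forall>C\<in>claims d T F S. L1_nn Qb (claim_bar d T S C) \<longrightarrow> star_identity d T F S Q Qb r C"
    and r: "r \<in> {0..T}" and C: "C \<in> claims d T F S" and i: "i \<in> {1..d}"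
    and AEC: "AE w in Qb. claim_bar d T S C w = claim_bar d T S C w * indicator {x. i \<in> active d S T x} w"
  have Pb: "prob_on T F Qb" using V unfolding valuation_measure_def by auto
  have Pi: "prob_on T F (Q i)" using NC_parts(1)[OF NC i] .
  have D: "DENS Q Qb" by (rule U[OF Pb NC ST_Cib_b[OF Pb H]])
  have Qi: "Q i = density Qb (Zf i)" by (rule dens_density[OF Pb Pi D i])
  have Xm: "(\<lambda>x. C x i) \<in> borel_measurable Qb" using claim_meas(1)[OF Pb C i] .
  interpret sM: sigma_finite_subalgebra Qb "F r" using sfs[OF Pb r] .
  have B2: "AE w in Qb. nn_cond_exp Qb (F r) (\<lambda>x. ennreal (basket d S i T x) * C x i) w
       = ennreal (basket d S i r w) * nn_cond_exp (Q i) (F r) (\<lambda>x. C x i) w"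
    by (rule bayes2[of Qb i Q r, OF V i Pi Qi r Xm])
  have E: "AE w in Qb. claim_bar d T S C w = ennreal (basket d S i T w) * C w i"
    using AEC AE_space
  proof eventually_elim
    case (elim x)
    then have x: "x \<in> \<Omega>" using prob_on_sp[OF Pb] by simp
    interpret xm d "S T x" using Sem zeroT x by auto
    show ?case
    proof (cases "i \<in> actm d (S T x)")
      case True
      then show ?thesis using Cbar_act[OF x C True] by simp
    next
      case False
      then have "i \<notin> active d S T x" using active_eq by simp
      then have "claim_bar d T S C x = 0" using elim(1) by simp
      moreover have "ennreal (basket d S i T x) = 0" using sb_eq[OF zeroT(2) x i] ib_inact[OF False i] by simp
      ultimately show ?thesis by simp
    qed
  qed
  have E2: "AE w in Qb. nn_cond_exp Qb (F r) (claim_bar d T S C) w = nn_cond_exp Qb (F r) (\<lambda>x. ennreal (basket d S i T x) * C x i) w"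
    using E Cbar_meas[OF Pb C] sbm[OF Pb zeroT(2) i] Xm
    by (intro sM.nn_cond_exp_cong borel_measurable_times_ennreal) auto
  show "AE w in Qb. nn_cond_exp Qb (F r) (claim_bar d T S C) w =
            ennreal (basket d S i r w) * nn_cond_exp (Q i) (F r) (\<lambda>x. C x i) w"
    using E2 B2 by (auto elim: eventually_elim2)
qed

end

theorem mainTheorem2:
  fixes d :: nat and T :: real and F :: "real \<Rightarrow> 'a measure"
    and S :: "real \<Rightarrow> 'a \<Rightarrow> nat \<Rightarrow> nat \<Rightarrow> ennreal"
  assumes d: "d \<ge> 1"
    and filt: "filtration T F"
    and proc: "exchange_process d T F S"
    and act0: "\<forall>w\<in>space (F T). active d S 0 w = {1..d}"
  shows
    "(\<forall>Qb. valuation_measure d T F S Qb \<longrightarrow>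
        (\<exists>Q. numeraire_consistent d T F S Q \<and> equiv_sum d T F Q Qb \<and>
             (\<forall>r\<in>{0..T}. \<forall>C\<in>claims d T F S. L1_nn Qb (claim_bar d T S C) \<longrightarrow>
                 star_identity d T F S Q Qb r C) \<and>
             (\<forall>Q'. numeraire_consistent d T F S Q' \<and> equiv_sum d T F Q' Qb \<and>
                 (\<forall>r\<in>{0..T}. \<forall>C\<in>claims d T F S. L1_nn Qb (claim_bar d T S C) \<longrightarrow>
                     star_identity d T F S Q' Qb r C)
               \<longrightarrow> (\<forall>i\<in>{1..d}. Q' i = Q i))))
   \<and> (\<forall>Q. numeraire_consistent d T F S Q \<longrightarrow>
        (\<exists>!Qb. valuation_measure d T F S Qb \<and> equiv_sum d T F Q Qb \<and>
             (\<forall>r\<in>{0..T}. \<forall>C\<in>claims d T F S. (\<forall>i\<in>{1..d}. L1_nn (Q i) (\<lambda>w. C w i)) \<longrightarrow>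
                 star_identity d T F S Q Qb r C)))
   \<and> (\<forall>Qb Q r C i. valuation_measure d T F S Qb \<and>
        numeraire_consistent d T F S Q \<and> equiv_sum d T F Q Qb \<and>
        (\<forall>r\<in>{0..T}. \<forall>C\<in>claims d T F S. L1_nn Qb (claim_bar d T S C) \<longrightarrow>
            star_identity d T F S Q Qb r C) \<and>
        r \<in> {0..T} \<and> C \<in> claims d T F S \<and> i \<in> {1..d} \<and>
        (AE w in Qb. claim_bar d T S C w =
            claim_bar d T S C w * indicator {x. i \<in> active d S T x} w) \<and>
        L1_nn Qb (claim_bar d T S C)
      \<longrightarrow> (AE w in Qb. nn_cond_exp Qb (F r) (claim_bar d T S C) w =
            ennreal (basket d S i r w) * nn_cond_exp (Q i) (F r) (\<lambda>x. C x i) w))"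
proof -
  interpret mk d T F S using assms by (unfold_locales) auto
  show ?thesis using mainA mainB mainC by blast
qed

end
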